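(* Fix a supervised example $(x^*,y^* )$ and $q\in[0,1]$. Draw $z^{(1)},\dots,z^{(M)}$ i.i.d. from $p_\theta(\cdot\mid x^* )$ and set $$w_m\triangleq p_\theta(y^*\mid x^*,z^{(m)})\in[0,1],\qquad g_m\triangleq-w_m\,\nabla_\theta\log p_\theta(z^{(m)},y^*\mid x^* ),$$ $\bar w_M=\frac1M\sum_mw_m$, $\bar g_M=\frac1M\sum_mg_m$, and the estimator $\hat\nabla_\theta\ell_q\triangleq\bar g_M/(\bar w_M)^q$. Assume (1) $P_\theta>0$; (2) $\mathbb{E}[\|g_m\|^2]<\infty$; (3) $w_m\ge\varepsilon$ almost surely for some $\varepsilon>0$; and that differentiation and summation over $z$ may be interchanged, so that $\mathbb{E}[w_m]=P_\theta$ and $\mathbb{E}[g_m]=-\nabla_\theta P_\theta$. Then $\hat\nabla_\theta\ell_q\to\nabla_\theta\ell_q$ almost surely as $M\to\infty$, and $$\mathbb{E}\big[\hat\nabla_\theta\ell_q\big]-\nabla_\theta\ell_q=\frac{q}{M\,P_\theta^{q+1}}\left[\frac{q+1}{2}\,\nabla_\theta\ell_1\,\mathrm{Var}(w_m)-\mathrm{Cov}(g_m,w_m)\right]+O(M^{-2})\quad(M\to\infty),$$ where $\nabla_\theta\ell_1=-\nabla_\theta\log P_\theta$ and $\mathrm{Cov}(g_m,w_m)=\mathbb{E}[(g_m-\mathbb{E}g_m)(w_m-\mathbb{E}w_m)]\in\mathbb{R}^d$. Moreover, if in addition $\|\nabla_\theta\log P_\theta\|\le C$ and $\|\nabla_\theta\log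 p_\theta(z,y^*\mid x^* )\|\le C'$ for all $z$, then the leading term has norm at most $(C+C')\,\dfrac{q}{M\,P_\theta^{q}}$; i.e. the bias is $O\!\big(q/(MP_\theta^q)\big)+O(M^{-2})$. For $q=0$ the estimator is exactly unbiased for every $M$.
   Context: $p_\theta$ is a model with parameters $\theta\in\mathbb{R}^d$ that samples a latent $z$ (from a countable set) from $p_\theta(\cdot\mid x)$ and an output from $p_\theta(\cdot\mid x,z)$; $P_\theta\triangleq p_\theta(y^*\mid x^* )=\sum_z p_\theta(z,y^*\mid x^* )$. The Tsallis $q$-logarithm is $\log_q(u)=\frac{u^{1-q}-1}{1-q}$ ($q<1$), $\log_1(u)=\log u$, and $\ell_q\triangleq-\log_q P_\theta$, so $\nabla_\theta\ell_q=-P_\theta^{-q}\nabla_\theta P_\theta$. *)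

theory Defs
  imports "HOL-Probability.Probability" "HOL-Library.Landau_Symbols"
begin

definition marg :: "('a \<Rightarrow> 'z pmf) \<Rightarrow> ('a \<Rightarrow> 'z \<Rightarrow> real) \<Rightarrow> 'a \<Rightarrow> real" where
  "marg pz w \<theta> = (\<Sum>\<^sub>\<infinity>z. pmf (pz \<theta>) z * w \<theta> z)"

text \<open>Gradient of the Tsallis loss: grad l_q = - P^(-q) grad P.\<close>
definition grad_ell :: "real \<Rightarrow> real \<Rightarrow> 'a::real_vector \<Rightarrow> 'a" where
  "grad_ell q P DP = - ((P powr (-q)) *\<^sub>R DP)"

definition est :: "real \<Rightarrow> ('z \<Rightarrow> real) \<Rightarrow> ('z \<Rightarrow> 'a::real_vector) \<Rightarrow> (nat \<Rightarrow> 'w \<Rightarrow> 'z) \<Rightarrow> nat \<Rightarrow> 'w \<Rightarrow> 'a" where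
  "est q wt gt Z M \<omega> =
     (let wb = (\<Sum>m<M. wt (Z m \<omega>)) / real M;
          gb = (1 / real M) *\<^sub>R (\<Sum>m<M. gt (Z m \<omega>))
      in (1 / (wb powr q)) *\<^sub>R gb)"

definition rvar :: "'w measure \<Rightarrow> ('w \<Rightarrow> real) \<Rightarrow> real" where
  "rvar S f = integral\<^sup>L S (\<lambda>\<omega>. (f \<omega> - integral\<^sup>L S f)\<^sup>2)"

definition rcov :: "'w measure \<Rightarrow> ('w \<Rightarrow> 'a::{banach,second_countable_topology}) \<Rightarrow> ('w \<Rightarrow> real) \<Rightarrow> 'a" where
  "rcov S g f = integral\<^sup>L S (\<lambda>\<omega>. (f \<omega> - integral\<^sup>L S f) *\<^sub>R (g \<omega> - integral\<^sup>L S g))"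

definition lead_term :: "real \<Rightarrow> real \<Rightarrow> 'a::real_vector \<Rightarrow> real \<Rightarrow> 'a \<Rightarrow> nat \<Rightarrow> 'a" where
  "lead_term q P DP V Cv M =
     (q / (real M * P powr (q + 1))) *\<^sub>R (((q + 1) / 2 * V) *\<^sub>R grad_ell 1 P DP - Cv)"

end

theory Submission
  imports Defs "HOL-Library.Discrete_Functions"
begin
locale iid = prob_space S for S :: "'w measure" +
  fixes Z :: "nat \<Rightarrow> 'w \<Rightarrow> 'z::countable" and \<mu> :: "'z pmf"
  assumes indep: "indep_vars (\<lambda>_. count_space UNIV) Z UNIV"
    and distr_Z: "\<And>m. distr S (count_space UNIV) (Z m) = measure_pmf \<mu>"
begin

lemma Z_meas[measurable]: "Z m \<in> measurable S (count_space UNIV)"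
  using indep unfolding indep_vars_def by auto

lemma fZ_meas[measurable]: "(\<lambda>\<omega>. f (Z m \<omega>)) \<in> borel_measurable S"
  by (rule measurable_compose[OF Z_meas]) simp

lemma int_fZ: "integrable S (\<lambda>\<omega>. (f::'z \<Rightarrow> 'b::{banach,second_countable_topology}) (Z m \<omega>)) \<longleftrightarrow> integrable (measure_pmf \<mu>) f"
proof -
  have "integrable (distr S (count_space UNIV) (Z m)) f \<longleftrightarrow> integrable S (\<lambda>\<omega>. f (Z m \<omega>))"
    by (rule integrable_distr_eq) auto
  then show ?thesis using distr_Z by simp
qed

lemma E_fZ: "integral\<^sup>L S (\<lambda>\<omega>. (f::'z \<Rightarrow> 'b::{banach,second_countable_topology}) (Z m \<omega>)) = integral\<^sup>L (measure_pmf \<mu>) f"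
proof -
  have "integral\<^sup>L (distr S (count_space UNIV) (Z m)) f = integral\<^sup>L S (\<lambda>\<omega>. f (Z m \<omega>))"
    by (rule integral_distr) auto
  then show ?thesis using distr_Z by simp
qed

lemma pi_comp_meas[measurable]:
  "j \<in> J \<Longrightarrow> (\<lambda>f. (A::'z\<Rightarrow>real) (f j)) \<in> borel_measurable (PiM J (\<lambda>_. count_space UNIV))"
  by (rule measurable_compose[OF measurable_component_singleton]) auto

lemma indep_factor:
  fixes h :: "(nat \<Rightarrow> 'z) \<Rightarrow> real"
  assumes "k \<notin> J" and hm: "h \<in> borel_measurable (PiM J (\<lambda>_. count_space UNIV))"
    and ih: "integrable S (\<lambda>\<omega>. h (restrict (\<lambda>i. Z i \<omega>) J))"
    and ic: "integrable S (\<lambda>\<omega>. c (Z k \<omega>))"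
  shows "integral\<^sup>L S (\<lambda>\<omega>. h (restrict (\<lambda>i. Z i \<omega>) J) * c (Z k \<omega>)) =
         integral\<^sup>L S (\<lambda>\<omega>. h (restrict (\<lambda>i. Z i \<omega>) J)) * integral\<^sup>L S (\<lambda>\<omega>. c (Z k \<omega>))"
proof -
  have iv: "indep_var (PiM J (\<lambda>_. count_space UNIV)) (\<lambda>\<omega>. restrict (\<lambda>i. Z i \<omega>) J)
                  (PiM {k} (\<lambda>_. count_space UNIV)) (\<lambda>\<omega>. restrict (\<lambda>i. Z i \<omega>) {k})"
    by (rule indep_var_restrict[OF indep]) (use assms in auto)
  have m2: "(\<lambda>f. c (f k)) \<in> borel_measurable (PiM {k} (\<lambda>_. count_space UNIV))"
    by (rule measurable_compose[OF measurable_component_singleton]) auto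
  have "indep_var borel (h \<circ> (\<lambda>\<omega>. restrict (\<lambda>i. Z i \<omega>) J)) borel ((\<lambda>f. c (f k)) \<circ> (\<lambda>\<omega>. restrict (\<lambda>i. Z i \<omega>) {k}))"
    by (rule indep_var_compose[OF iv hm m2])
  then have "indep_var borel (\<lambda>\<omega>. h (restrict (\<lambda>i. Z i \<omega>) J)) borel (\<lambda>\<omega>. c (Z k \<omega>))"
    by (simp add: comp_def)
  from indep_var_lebesgue_integral[OF this ih ic] show ?thesis .
qed

end

context iid begin

lemma intZ_sq_imp: "integrable (measure_pmf \<mu>) (\<lambda>z. (A z)^2) \<Longrightarrow> integrable S (\<lambda>\<omega>. (A::'z\<Rightarrow>real) (Z i \<omega>))"
  by (rule square_integrable_imp_integrable) (auto simp: int_fZ[of "\<lambda>z. (A z)^2"])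

lemma intZ_sq: "integrable (measure_pmf \<mu>) (\<lambda>z. (A z)^2) \<Longrightarrow> integrable S (\<lambda>\<omega>. ((A::'z\<Rightarrow>real) (Z i \<omega>))^2)"
  by (simp add: int_fZ[of "\<lambda>z. (A z)^2"])

lemma int_prod2:
  fixes A B :: "'z \<Rightarrow> real"
  assumes "integrable (measure_pmf \<mu>) (\<lambda>z. (A z)^2)" "integrable (measure_pmf \<mu>) (\<lambda>z. (B z)^2)"
  shows "integrable S (\<lambda>\<omega>. A (Z i \<omega>) * B (Z j \<omega>))"
proof (rule Bochner_Integration.integrable_bound[where f="\<lambda>\<omega>. ((A (Z i \<omega>))^2 + (B (Z j \<omega>))^2) / 2"])
  show "integrable S (\<lambda>\<omega>. ((A (Z i \<omega>))^2 + (B (Z j \<omega>))^2) / 2)"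
    using assms by (intro integrable_divide integrable_add) (auto simp: intZ_sq)
  show "AE \<omega> in S. norm (A (Z i \<omega>) * B (Z j \<omega>)) \<le> norm (((A (Z i \<omega>))^2 + (B (Z j \<omega>))^2) / 2)"
  proof (intro AE_I2)
    fix \<omega>
    have "0 \<le> (\<bar>A (Z i \<omega>)\<bar> - \<bar>B (Z j \<omega>)\<bar>)^2" by simp
    then show "norm (A (Z i \<omega>) * B (Z j \<omega>)) \<le> norm (((A (Z i \<omega>))^2 + (B (Z j \<omega>))^2) / 2)"
      by (simp add: power2_eq_square abs_mult algebra_simps)
  qed
qed simp

lemma int_prod4:
  fixes A B C D :: "'z \<Rightarrow> real"
  assumes "integrable (measure_pmf \<mu>) (\<lambda>z. (A z)^2)" "integrable (measure_pmf \<mu>) (\<lambda>z. (B z)^2)"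
    and "\<And>z. \<bar>C z\<bar> \<le> c" "\<And>z. \<bar>D z\<bar> \<le> d"
  shows "integrable S (\<lambda>\<omega>. A (Z i \<omega>) * B (Z j \<omega>) * C (Z k \<omega>) * D (Z l \<omega>))"
proof (rule Bochner_Integration.integrable_bound[where f="\<lambda>\<omega>. (c * d) * (A (Z i \<omega>) * B (Z j \<omega>))"])
  show "integrable S (\<lambda>\<omega>. (c * d) * (A (Z i \<omega>) * B (Z j \<omega>)))"
    using int_prod2[OF assms(1,2)] by simp
  show "AE \<omega> in S. norm (A (Z i \<omega>) * B (Z j \<omega>) * C (Z k \<omega>) * D (Z l \<omega>)) \<le> norm ((c * d) * (A (Z i \<omega>) * B (Z j \<omega>)))"
  proof (intro AE_I2)
    fix \<omega>
    have c0: "0 \<le> c" using assms(3)[of undefined] by simp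
    have d0: "0 \<le> d" using assms(4)[of undefined] by simp
    have "\<bar>C (Z k \<omega>) * D (Z l \<omega>)\<bar> \<le> c * d"
      unfolding abs_mult by (intro mult_mono assms(3,4)) (use c0 d0 in auto)
    then have "\<bar>A (Z i \<omega>) * B (Z j \<omega>)\<bar> * \<bar>C (Z k \<omega>) * D (Z l \<omega>)\<bar> \<le> \<bar>A (Z i \<omega>) * B (Z j \<omega>)\<bar> * (c * d)"
      by (intro mult_left_mono) auto
    then show "norm (A (Z i \<omega>) * B (Z j \<omega>) * C (Z k \<omega>) * D (Z l \<omega>)) \<le> norm ((c * d) * (A (Z i \<omega>) * B (Z j \<omega>)))"
      using c0 d0 by (simp add: abs_mult mult_ac)
  qed
qed simp

lemma factor4:
  fixes A B C D :: "'z \<Rightarrow> real"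
  assumes "i \<noteq> j" "i \<noteq> k" "i \<noteq> l"
    and iA: "integrable S (\<lambda>\<omega>. A (Z i \<omega>))"
    and iBCD: "integrable S (\<lambda>\<omega>. B (Z j \<omega>) * C (Z k \<omega>) * D (Z l \<omega>))"
    and EA: "integral\<^sup>L (measure_pmf \<mu>) A = 0"
  shows "integral\<^sup>L S (\<lambda>\<omega>. A (Z i \<omega>) * B (Z j \<omega>) * C (Z k \<omega>) * D (Z l \<omega>)) = 0"
proof -
  let ?J = "{j,k,l}"
  let ?h = "\<lambda>f. B (f j) * C (f k) * D (f l)"
  have hm: "?h \<in> borel_measurable (PiM ?J (\<lambda>_. count_space UNIV))"
    by (intro borel_measurable_times pi_comp_meas) auto
  have eq: "\<And>\<omega>. ?h (restrict (\<lambda>i. Z i \<omega>) ?J) = B (Z j \<omega>) * C (Z k \<omega>) * D (Z l \<omega>)" by simp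
  have "integral\<^sup>L S (\<lambda>\<omega>. ?h (restrict (\<lambda>i. Z i \<omega>) ?J) * A (Z i \<omega>)) =
         integral\<^sup>L S (\<lambda>\<omega>. ?h (restrict (\<lambda>i. Z i \<omega>) ?J)) * integral\<^sup>L S (\<lambda>\<omega>. A (Z i \<omega>))"
    by (rule indep_factor[OF _ hm]) (use assms in \<open>simp_all only: eq\<close>, auto)
  also have "integral\<^sup>L S (\<lambda>\<omega>. A (Z i \<omega>)) = 0" using EA by (simp add: E_fZ)
  finally show ?thesis by (simp add: mult_ac)
qed


lemma sum4_bound:
  fixes t :: "nat \<Rightarrow> nat \<Rightarrow> nat \<Rightarrow> nat \<Rightarrow> real"
  assumes "\<And>i j k l. \<bar>t i j k l\<bar> \<le> K * ((if i = j then 1 else 0) * (if k = l then 1 else 0)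
      + (if i = k then 1 else 0) * (if j = l then 1 else 0) + (if i = l then 1 else 0) * (if j = k then 1 else 0))"
  shows "\<bar>\<Sum>i<M. \<Sum>j<M. \<Sum>k<M. \<Sum>l<M. t i j k l\<bar> \<le> 3 * K * (real M)^2"
proof -
  have "\<bar>\<Sum>i<M. \<Sum>j<M. \<Sum>k<M. \<Sum>l<M. t i j k l\<bar> \<le> (\<Sum>i<M. \<Sum>j<M. \<Sum>k<M. \<Sum>l<M. \<bar>t i j k l\<bar>)"
    by (intro order.trans[OF sum_abs] sum_mono) (intro order.trans[OF sum_abs] sum_mono order.refl)+
  also have "\<dots> \<le> (\<Sum>i<M. \<Sum>j<M. \<Sum>k<M. \<Sum>l<M. K * ((if i = j then 1 else 0) * (if k = l then 1 else 0)
      + (if i = k then 1 else 0) * (if j = l then 1 else 0) + (if i = l then 1 else 0) * (if j = k then 1 else 0)))"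
    by (intro sum_mono assms)
  also have "\<dots> = 3 * K * (real M)^2"
  proof -
    have e1: "(\<Sum>i<M. \<Sum>j<M. \<Sum>k<M. \<Sum>l<M. (if i = j then 1 else 0) * (if k = l then 1 else (0::real))) = real M * real M"
      by (simp only: sum_distrib_left[symmetric] sum_distrib_right[symmetric]) simp
    have e2: "(\<Sum>i<M. \<Sum>j<M. \<Sum>k<M. \<Sum>l<M. (if i = k then 1 else 0) * (if j = l then 1 else (0::real))) = real M * real M"
      by (simp only: sum_distrib_left[symmetric] sum_distrib_right[symmetric]) simp
    have e3: "(\<Sum>i<M. \<Sum>j<M. \<Sum>k<M. \<Sum>l<M. (if i = l then 1 else 0) * (if j = k then 1 else (0::real))) = real M * real M"
      by (simp only: sum_distrib_left[symmetric] sum_distrib_right[symmetric]) simp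
    have k: "\<And>f :: nat \<Rightarrow> nat \<Rightarrow> nat \<Rightarrow> nat \<Rightarrow> real. (\<Sum>i<M. \<Sum>j<M. \<Sum>k<M. \<Sum>l<M. K * f i j k l) = K * (\<Sum>i<M. \<Sum>j<M. \<Sum>k<M. \<Sum>l<M. f i j k l)"
      by (simp add: sum_distrib_left)
    have d: "\<And>f g h :: nat \<Rightarrow> nat \<Rightarrow> nat \<Rightarrow> nat \<Rightarrow> real. (\<Sum>i<M. \<Sum>j<M. \<Sum>k<M. \<Sum>l<M. f i j k l + g i j k l + h i j k l) =
       (\<Sum>i<M. \<Sum>j<M. \<Sum>k<M. \<Sum>l<M. f i j k l) + (\<Sum>i<M. \<Sum>j<M. \<Sum>k<M. \<Sum>l<M. g i j k l) + (\<Sum>i<M. \<Sum>j<M. \<Sum>k<M. \<Sum>l<M. h i j k l)"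
      by (simp add: sum.distrib)
    show ?thesis
      by (simp only: k d e1 e2 e3) (simp add: power2_eq_square)
  qed
  finally show ?thesis .
qed

end

context iid begin

lemma sum3_bound:
  fixes t :: "nat \<Rightarrow> nat \<Rightarrow> nat \<Rightarrow> real"
  assumes "\<And>i j k. \<bar>t i j k\<bar> \<le> K * ((if i = j then 1 else 0) * (if i = k then 1 else 0))"
  shows "\<bar>\<Sum>i<M. \<Sum>j<M. \<Sum>k<M. t i j k\<bar> \<le> K * real M"
proof -
  have "\<bar>\<Sum>i<M. \<Sum>j<M. \<Sum>k<M. t i j k\<bar> \<le> (\<Sum>i<M. \<Sum>j<M. \<Sum>k<M. \<bar>t i j k\<bar>)"
    by (intro order.trans[OF sum_abs] sum_mono) (intro order.trans[OF sum_abs] sum_mono order.refl)+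
  also have "\<dots> \<le> (\<Sum>i<M. \<Sum>j<M. \<Sum>k<M. K * ((if i = j then 1 else 0) * (if i = k then 1 else 0)))"
    by (intro sum_mono assms)
  also have "\<dots> = K * (\<Sum>i<M. \<Sum>j<M. \<Sum>k<M. ((if i = j then 1 else 0) * (if i = k then 1 else 0)))"
    by (simp add: sum_distrib_left)
  also have "(\<Sum>i<M. \<Sum>j<M. \<Sum>k<M. ((if i = j then 1 else 0) * (if i = k then 1 else (0::real)))) = real M"
    by (simp only: sum_distrib_left[symmetric] sum_distrib_right[symmetric]) simp
  finally show ?thesis by simp
qed

lemma int_sq_pmf_imp: "integrable (measure_pmf \<mu>) (\<lambda>z. (A z)^2) \<Longrightarrow> integrable (measure_pmf \<mu>) (A::'z \<Rightarrow> real)"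
  by (rule measure_pmf.square_integrable_imp_integrable) auto

lemma bdd_sq: "(\<And>z. \<bar>(C::'z\<Rightarrow>real) z\<bar> \<le> c) \<Longrightarrow> integrable (measure_pmf \<mu>) (\<lambda>z. (C z)^2)"
  by (rule measure_pmf.integrable_const_bound[where B="c^2"]) (auto simp: abs_le_square_iff[symmetric] intro: order.trans[OF _ abs_ge_self])

lemma mom2:
  fixes A B :: "'z \<Rightarrow> real"
  assumes sA: "integrable (measure_pmf \<mu>) (\<lambda>z. (A z)^2)" and sB: "integrable (measure_pmf \<mu>) (\<lambda>z. (B z)^2)"
    and EA: "integral\<^sup>L (measure_pmf \<mu>) A = 0"
  shows "integral\<^sup>L S (\<lambda>\<omega>. (\<Sum>i<M. A (Z i \<omega>)) * (\<Sum>j<M. B (Z j \<omega>))) = real M * integral\<^sup>L (measure_pmf \<mu>) (\<lambda>z. A z * B z)"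
proof -
  have 1: "(\<lambda>\<omega>. (\<Sum>i<M. A (Z i \<omega>)) * (\<Sum>j<M. B (Z j \<omega>))) = (\<lambda>\<omega>. \<Sum>i<M. \<Sum>j<M. A (Z i \<omega>) * B (Z j \<omega>))"
    by (simp add: sum_product)
  have ip: "\<And>i j. integrable S (\<lambda>\<omega>. A (Z i \<omega>) * B (Z j \<omega>))" by (rule int_prod2[OF sA sB])
  have t: "integral\<^sup>L S (\<lambda>\<omega>. A (Z i \<omega>) * B (Z j \<omega>)) = (if i = j then integral\<^sup>L (measure_pmf \<mu>) (\<lambda>z. A z * B z) else 0)" for i j
  proof (cases "i = j")
    case True then show ?thesis using E_fZ[of "\<lambda>z. A z * B z" i] by simp
  next
    case False
    have "integral\<^sup>L S (\<lambda>\<omega>. A (Z i \<omega>) * B (Z j \<omega>) * 1 * 1) = 0"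
      by (rule factor4[where C="\<lambda>_. 1" and D="\<lambda>_. 1"]) (use False intZ_sq_imp[OF sA] intZ_sq_imp[OF sB] EA in auto)
    then show ?thesis using False by simp
  qed
  show ?thesis
    unfolding 1 using ip by (simp add: integral_sum t)
qed


lemma prod3_expand: "(\<Sum>i<M. (a::nat\<Rightarrow>real) i) * (\<Sum>j<M. b j) * (\<Sum>k<M. c k) = (\<Sum>i<M. \<Sum>j<M. \<Sum>k<M. a i * b j * c k)"
  apply (subst sum_product)
  apply (simp only: sum_distrib_right)
  apply (simp only: sum_distrib_left)
  done

lemma prod4_expand: "(\<Sum>i<M. (a::nat\<Rightarrow>real) i) * (\<Sum>j<M. b j) * (\<Sum>k<M. c k) * (\<Sum>l<M. d l) = (\<Sum>i<M. \<Sum>j<M. \<Sum>k<M. \<Sum>l<M. a i * b j * c k * d l)"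
  apply (subst prod3_expand)
  apply (simp only: sum_distrib_right)
  apply (simp only: sum_distrib_left)
  done

lemma mom3:
  fixes A B C :: "'z \<Rightarrow> real"
  assumes sA: "integrable (measure_pmf \<mu>) (\<lambda>z. (A z)^2)"
    and bB: "\<And>z. \<bar>B z\<bar> \<le> c" and bC: "\<And>z. \<bar>C z\<bar> \<le> c"
    and EA: "integral\<^sup>L (measure_pmf \<mu>) A = 0" and EB: "integral\<^sup>L (measure_pmf \<mu>) B = 0"
    and EC: "integral\<^sup>L (measure_pmf \<mu>) C = 0"
  shows "\<bar>integral\<^sup>L S (\<lambda>\<omega>. (\<Sum>i<M. A (Z i \<omega>)) * (\<Sum>j<M. B (Z j \<omega>)) * (\<Sum>k<M. C (Z k \<omega>)))\<bar>
         \<le> (c * c * integral\<^sup>L (measure_pmf \<mu>) (\<lambda>z. \<bar>A z\<bar>)) * real M"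
proof -
  have c0: "0 \<le> c" using bB[of undefined] by simp
  have s1: "integrable (measure_pmf \<mu>) (\<lambda>z. ((\<lambda>_. 1::real) z)^2)" by simp
  have sB: "integrable (measure_pmf \<mu>) (\<lambda>z. (B z)^2)" by (rule bdd_sq[OF bB])
  have b1: "\<And>z. \<bar>(\<lambda>_. 1::real) z\<bar> \<le> 1" by simp
  have ip: "\<And>i j k. integrable S (\<lambda>\<omega>. A (Z i \<omega>) * B (Z j \<omega>) * C (Z k \<omega>))"
    using int_prod4[OF sA s1 bB bC] by simp
  have iA: "\<And>i. integrable S (\<lambda>\<omega>. A (Z i \<omega>))" by (rule intZ_sq_imp[OF sA])
  have iB: "\<And>i. integrable S (\<lambda>\<omega>. B (Z i \<omega>))" by (rule intZ_sq_imp[OF sB])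
  have iC: "\<And>i. integrable S (\<lambda>\<omega>. C (Z i \<omega>))" by (rule intZ_sq_imp[OF bdd_sq[OF bC]])
  have K0: "0 \<le> c * c * integral\<^sup>L (measure_pmf \<mu>) (\<lambda>z. \<bar>A z\<bar>)" using c0 by simp
  have t: "\<bar>integral\<^sup>L S (\<lambda>\<omega>. A (Z i \<omega>) * B (Z j \<omega>) * C (Z k \<omega>))\<bar>
     \<le> (c * c * integral\<^sup>L (measure_pmf \<mu>) (\<lambda>z. \<bar>A z\<bar>)) * ((if i = j then 1 else 0) * (if i = k then 1 else 0))" for i j k
  proof (cases "i = j \<and> i = k")
    case True
    have "\<bar>integral\<^sup>L S (\<lambda>\<omega>. A (Z i \<omega>) * B (Z i \<omega>) * C (Z i \<omega>))\<bar> \<le> integral\<^sup>L S (\<lambda>\<omega>. \<bar>A (Z i \<omega>) * B (Z i \<omega>) * C (Z i \<omega>)\<bar>)"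
      by (rule integral_abs_bound)
    also have "\<dots> \<le> integral\<^sup>L S (\<lambda>\<omega>. c * c * \<bar>A (Z i \<omega>)\<bar>)"
    proof (rule integral_mono)
      show "integrable S (\<lambda>\<omega>. \<bar>A (Z i \<omega>) * B (Z i \<omega>) * C (Z i \<omega>)\<bar>)" using ip by simp
      show "integrable S (\<lambda>\<omega>. c * c * \<bar>A (Z i \<omega>)\<bar>)" using iA by simp
      fix \<omega>
      have "\<bar>B (Z i \<omega>)\<bar> * \<bar>C (Z i \<omega>)\<bar> \<le> c * c" by (intro mult_mono bB bC) (use c0 in auto)
      then have "\<bar>A (Z i \<omega>)\<bar> * (\<bar>B (Z i \<omega>)\<bar> * \<bar>C (Z i \<omega>)\<bar>) \<le> \<bar>A (Z i \<omega>)\<bar> * (c * c)"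
        by (intro mult_left_mono) auto
      then show "\<bar>A (Z i \<omega>) * B (Z i \<omega>) * C (Z i \<omega>)\<bar> \<le> c * c * \<bar>A (Z i \<omega>)\<bar>"
        by (simp add: abs_mult mult_ac)
    qed
    also have "\<dots> = c * c * integral\<^sup>L (measure_pmf \<mu>) (\<lambda>z. \<bar>A z\<bar>)"
      using E_fZ[of "\<lambda>z. \<bar>A z\<bar>" i] by simp
    finally show ?thesis using True by (simp del: One_nat_def) (metis)
  next
    case False
    have "integral\<^sup>L S (\<lambda>\<omega>. A (Z i \<omega>) * B (Z j \<omega>) * C (Z k \<omega>)) = 0"
    proof -
      consider "i \<noteq> j \<and> i \<noteq> k" | "j \<noteq> i \<and> j \<noteq> k" | "k \<noteq> i \<and> k \<noteq> j" using False by blast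
      then show ?thesis
      proof cases
        case 1
        have "integral\<^sup>L S (\<lambda>\<omega>. A (Z i \<omega>) * B (Z j \<omega>) * C (Z k \<omega>) * 1) = 0"
          by (rule factor4[where D="\<lambda>_. 1" and l=j]) (use 1 iA EA in auto, use int_prod4[OF sB s1 bC b1] in simp)
        then show ?thesis by simp
      next
        case 2
        have "integral\<^sup>L S (\<lambda>\<omega>. B (Z j \<omega>) * A (Z i \<omega>) * C (Z k \<omega>) * 1) = 0"
          by (rule factor4[where D="\<lambda>_. 1" and l=i]) (use 2 iB EB in auto, use int_prod4[OF sA s1 bC b1] in simp)
        then show ?thesis by (simp add: mult_ac)
      next
        case 3
        have "integral\<^sup>L S (\<lambda>\<omega>. C (Z k \<omega>) * A (Z i \<omega>) * B (Z j \<omega>) * 1) = 0"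
          by (rule factor4[where D="\<lambda>_. 1" and l=i]) (use 3 iC EC in auto, use int_prod4[OF sA s1 bB b1] in simp)
        then show ?thesis by (simp add: mult_ac)
      qed
    qed
    then show ?thesis using K0 by simp
  qed
  have "integral\<^sup>L S (\<lambda>\<omega>. (\<Sum>i<M. A (Z i \<omega>)) * (\<Sum>j<M. B (Z j \<omega>)) * (\<Sum>k<M. C (Z k \<omega>)))
     = (\<Sum>i<M. \<Sum>j<M. \<Sum>k<M. integral\<^sup>L S (\<lambda>\<omega>. A (Z i \<omega>) * B (Z j \<omega>) * C (Z k \<omega>)))"
    unfolding prod3_expand using ip by (simp add: integral_sum)
  then show ?thesis using sum3_bound[OF t] by simp
qed


lemma mom4:
  fixes A B C D :: "'z \<Rightarrow> real"
  assumes sA: "integrable (measure_pmf \<mu>) (\<lambda>z. (A z)^2)" and sB: "integrable (measure_pmf \<mu>) (\<lambda>z. (B z)^2)"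
    and bC: "\<And>z. \<bar>C z\<bar> \<le> c" and bD: "\<And>z. \<bar>D z\<bar> \<le> c"
    and EA: "integral\<^sup>L (measure_pmf \<mu>) A = 0" and EB: "integral\<^sup>L (measure_pmf \<mu>) B = 0"
    and EC: "integral\<^sup>L (measure_pmf \<mu>) C = 0" and ED: "integral\<^sup>L (measure_pmf \<mu>) D = 0"
  shows "\<bar>integral\<^sup>L S (\<lambda>\<omega>. (\<Sum>i<M. A (Z i \<omega>)) * (\<Sum>j<M. B (Z j \<omega>)) * (\<Sum>k<M. C (Z k \<omega>)) * (\<Sum>l<M. D (Z l \<omega>)))\<bar>
         \<le> 3 * (c * c * ((integral\<^sup>L (measure_pmf \<mu>) (\<lambda>z. (A z)^2) + integral\<^sup>L (measure_pmf \<mu>) (\<lambda>z. (B z)^2)) / 2)) * (real M)^2"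
proof -
  define K where "K = c * c * ((integral\<^sup>L (measure_pmf \<mu>) (\<lambda>z. (A z)^2) + integral\<^sup>L (measure_pmf \<mu>) (\<lambda>z. (B z)^2)) / 2)"
  have c0: "0 \<le> c" using bC[of undefined] by simp
  have s1: "integrable (measure_pmf \<mu>) (\<lambda>z. ((\<lambda>_. 1::real) z)^2)" by simp
  have b1: "\<And>z. \<bar>(\<lambda>_. 1::real) z\<bar> \<le> 1" by simp
  have ip: "\<And>i j k l. integrable S (\<lambda>\<omega>. A (Z i \<omega>) * B (Z j \<omega>) * C (Z k \<omega>) * D (Z l \<omega>))"
    by (rule int_prod4[OF sA sB]) (rule bC, rule bD)
  have iA: "\<And>i. integrable S (\<lambda>\<omega>. A (Z i \<omega>))" by (rule intZ_sq_imp[OF sA])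
  have iB: "\<And>i. integrable S (\<lambda>\<omega>. B (Z i \<omega>))" by (rule intZ_sq_imp[OF sB])
  have iC: "\<And>i. integrable S (\<lambda>\<omega>. C (Z i \<omega>))" by (rule intZ_sq_imp[OF bdd_sq[OF bC]])
  have iD: "\<And>i. integrable S (\<lambda>\<omega>. D (Z i \<omega>))" by (rule intZ_sq_imp[OF bdd_sq[OF bD]])
  have K0: "0 \<le> K" unfolding K_def
    by (intro mult_nonneg_nonneg divide_nonneg_pos add_nonneg_nonneg integral_nonneg_AE) (use c0 in auto)
  have gen: "\<bar>integral\<^sup>L S (\<lambda>\<omega>. A (Z i \<omega>) * B (Z j \<omega>) * C (Z k \<omega>) * D (Z l \<omega>))\<bar> \<le> K" for i j k l
  proof -
    have "\<bar>integral\<^sup>L S (\<lambda>\<omega>. A (Z i \<omega>) * B (Z j \<omega>) * C (Z k \<omega>) * D (Z l \<omega>))\<bar>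
        \<le> integral\<^sup>L S (\<lambda>\<omega>. \<bar>A (Z i \<omega>) * B (Z j \<omega>) * C (Z k \<omega>) * D (Z l \<omega>)\<bar>)"
      by (rule integral_abs_bound)
    also have "\<dots> \<le> integral\<^sup>L S (\<lambda>\<omega>. c * c * (((A (Z i \<omega>))^2 + (B (Z j \<omega>))^2) / 2))"
    proof (rule integral_mono)
      show "integrable S (\<lambda>\<omega>. \<bar>A (Z i \<omega>) * B (Z j \<omega>) * C (Z k \<omega>) * D (Z l \<omega>)\<bar>)" using ip by simp
      show "integrable S (\<lambda>\<omega>. c * c * (((A (Z i \<omega>))^2 + (B (Z j \<omega>))^2) / 2))"
        using intZ_sq[OF sA] intZ_sq[OF sB] by simp
      fix \<omega>
      have cd: "\<bar>C (Z k \<omega>)\<bar> * \<bar>D (Z l \<omega>)\<bar> \<le> c * c" by (intro mult_mono bC bD) (use c0 in auto)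
      have "0 \<le> (\<bar>A (Z i \<omega>)\<bar> - \<bar>B (Z j \<omega>)\<bar>)^2" by simp
      then have ab: "\<bar>A (Z i \<omega>)\<bar> * \<bar>B (Z j \<omega>)\<bar> \<le> ((A (Z i \<omega>))^2 + (B (Z j \<omega>))^2) / 2"
        by (simp add: power2_eq_square algebra_simps)
      have "(\<bar>A (Z i \<omega>)\<bar> * \<bar>B (Z j \<omega>)\<bar>) * (\<bar>C (Z k \<omega>)\<bar> * \<bar>D (Z l \<omega>)\<bar>) \<le> (((A (Z i \<omega>))^2 + (B (Z j \<omega>))^2) / 2) * (c * c)"
        by (intro mult_mono ab cd) auto
      then show "\<bar>A (Z i \<omega>) * B (Z j \<omega>) * C (Z k \<omega>) * D (Z l \<omega>)\<bar> \<le> c * c * (((A (Z i \<omega>))^2 + (B (Z j \<omega>))^2) / 2)"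
        by (simp add: abs_mult mult_ac)
    qed
    also have "\<dots> = K"
      using intZ_sq[OF sA, of i] intZ_sq[OF sB, of j] E_fZ[of "\<lambda>z. (A z)^2" i] E_fZ[of "\<lambda>z. (B z)^2" j]
      by (simp add: K_def)
    finally show ?thesis .
  qed
  have t: "\<bar>integral\<^sup>L S (\<lambda>\<omega>. A (Z i \<omega>) * B (Z j \<omega>) * C (Z k \<omega>) * D (Z l \<omega>))\<bar>
     \<le> K * ((if i = j then 1 else 0) * (if k = l then 1 else 0)
      + (if i = k then 1 else 0) * (if j = l then 1 else 0) + (if i = l then 1 else 0) * (if j = k then 1 else 0))" for i j k l
  proof (cases "(i = j \<and> k = l) \<or> (i = k \<and> j = l) \<or> (i = l \<and> j = k)")
    case True
    have "K \<le> K * ((if i = j then 1 else 0) * (if k = l then 1 else 0)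
      + (if i = k then 1 else 0) * (if j = l then 1 else 0) + (if i = l then 1 else 0) * (if j = k then 1 else 0))"
      using True K0 by auto
    then show ?thesis using gen[of i j k l] by linarith
  next
    case False
    have "integral\<^sup>L S (\<lambda>\<omega>. A (Z i \<omega>) * B (Z j \<omega>) * C (Z k \<omega>) * D (Z l \<omega>)) = 0"
    proof -
      consider "i \<noteq> j \<and> i \<noteq> k \<and> i \<noteq> l" | "j \<noteq> i \<and> j \<noteq> k \<and> j \<noteq> l"
        | "k \<noteq> i \<and> k \<noteq> j \<and> k \<noteq> l" | "l \<noteq> i \<and> l \<noteq> j \<and> l \<noteq> k" using False by blast
      then show ?thesis
      proof cases
        case 1
        show ?thesis
          by (rule factor4) (use 1 iA EA in auto, use int_prod4[OF sB s1 bC bD] in simp)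
      next
        case 2
        have "integral\<^sup>L S (\<lambda>\<omega>. B (Z j \<omega>) * A (Z i \<omega>) * C (Z k \<omega>) * D (Z l \<omega>)) = 0"
          by (rule factor4) (use 2 iB EB in auto, use int_prod4[OF sA s1 bC bD] in simp)
        then show ?thesis by (simp add: mult_ac)
      next
        case 3
        have "integral\<^sup>L S (\<lambda>\<omega>. C (Z k \<omega>) * A (Z i \<omega>) * B (Z j \<omega>) * D (Z l \<omega>)) = 0"
          by (rule factor4) (use 3 iC EC in auto, use int_prod4[OF sA sB bD b1] in simp)
        then show ?thesis by (simp add: mult_ac)
      next
        case 4
        have "integral\<^sup>L S (\<lambda>\<omega>. D (Z l \<omega>) * A (Z i \<omega>) * B (Z j \<omega>) * C (Z k \<omega>)) = 0"
          by (rule factor4) (use 4 iD ED in auto, use int_prod4[OF sA sB bC b1] in simp)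
        then show ?thesis by (simp add: mult_ac)
      qed
    qed
    then show ?thesis using K0 by simp
  qed
  have "integral\<^sup>L S (\<lambda>\<omega>. (\<Sum>i<M. A (Z i \<omega>)) * (\<Sum>j<M. B (Z j \<omega>)) * (\<Sum>k<M. C (Z k \<omega>)) * (\<Sum>l<M. D (Z l \<omega>)))
     = (\<Sum>i<M. \<Sum>j<M. \<Sum>k<M. \<Sum>l<M. integral\<^sup>L S (\<lambda>\<omega>. A (Z i \<omega>) * B (Z j \<omega>) * C (Z k \<omega>) * D (Z l \<omega>)))"
    unfolding prod4_expand using ip by (simp add: integral_sum)
  then show ?thesis using sum4_bound[OF t] by (simp add: K_def)
qed

end

lemma taylor4_powr:
  fixes q \<epsilon> P :: real
  assumes e0: "0 < \<epsilon>" and eP: "\<epsilon> \<le> P" and P1: "P \<le> 1" and q0: "0 \<le> q" and q1: "q \<le> 1"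
  shows "\<exists>f3 K. \<forall>x. \<epsilon> \<le> x \<and> x \<le> 1 \<longrightarrow>
     \<bar>1 / (x powr q) - (P powr (-q) - q * P powr (-q-1) * (x - P) + q * (q + 1) / 2 * P powr (-q-2) * (x - P)^2
        + f3 * (x - P)^3)\<bar> \<le> K * (x - P)^4"
proof -
  define diff where "diff m x = (\<Prod>k<m. (-q - real k)) * x powr (-q - real m)" for m x
  define f3 where "f3 = diff 3 P / fact 3"
  define K where "K = \<epsilon> powr (-q-4)"
  have D: "DERIV (diff m) t :> diff (Suc m) t" if "0 < t" for m t
  proof -
    have "DERIV (\<lambda>x. x powr (-q - real m)) t :> (-q - real m) * t powr (-q - real m - 1)"
      by (rule has_real_derivative_powr[OF that])
    then have "DERIV (diff m) t :> (\<Prod>k<m. (-q - real k)) * ((-q - real m) * t powr (-q - real m - 1))"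
      unfolding diff_def by (rule DERIV_cmult)
    moreover have "(\<Prod>k<m. (-q - real k)) * ((-q - real m) * t powr (-q - real m - 1)) = diff (Suc m) t"
      by (simp add: diff_def algebra_simps)
    ultimately show ?thesis by simp
  qed
  have main: "\<bar>1 / (x powr q) - (P powr (-q) - q * P powr (-q-1) * (x - P) + q * (q + 1) / 2 * P powr (-q-2) * (x - P)^2
        + f3 * (x - P)^3)\<bar> \<le> K * (x - P)^4" if x: "\<epsilon> \<le> x" "x \<le> 1" for x
  proof (cases "x = P")
    case True
    then show ?thesis using eP e0 by (simp add: powr_minus_divide)
  next
    case False
    have "\<exists>t. (if x < P then x < t \<and> t < P else P < t \<and> t < x) \<and>
      diff 0 x = (\<Sum>m<4. (diff m P / fact m) * (x - P)^m) + (diff 4 t / fact 4) * (x - P)^4"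
      by (rule Taylor[of 4 diff "diff 0" \<epsilon> 1 P x]) (use D e0 eP P1 x False in \<open>auto\<close>)
    then obtain t where tt: "(if x < P then x < t \<and> t < P else P < t \<and> t < x)" and
      eq: "diff 0 x = (\<Sum>m<4. (diff m P / fact m) * (x - P)^m) + (diff 4 t / fact 4) * (x - P)^4"
      by blast
    have t: "\<epsilon> \<le> t" "t \<le> 1" using tt x eP P1 by (auto split: if_splits)
    have s: "(\<Sum>m<4. (diff m P / fact m) * (x - P)^m) = P powr (-q) - q * P powr (-q-1) * (x - P) + q * (q + 1) / 2 * P powr (-q-2) * (x - P)^2
        + f3 * (x - P)^3"
      by (simp add: diff_def f3_def eval_nat_numeral fact_numeral algebra_simps)
    have d0: "diff 0 x = 1 / (x powr q)" by (simp add: diff_def powr_minus_divide)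
    have "\<bar>diff 4 t / fact 4\<bar> \<le> K"
    proof -
      have "\<bar>\<Prod>k<4. (-q - real k)\<bar> = q * (q+1) * (q+2) * (q+3)"
        using q0 by (simp add: eval_nat_numeral abs_mult algebra_simps)
      also have "\<dots> \<le> 1 * 2 * 3 * 4" using q0 q1 by (intro mult_mono) auto
      finally have pb: "\<bar>\<Prod>k<4. (-q - real k)\<bar> \<le> 24" by simp
      have tb: "t powr (-q - 4) \<le> \<epsilon> powr (-q - 4)"
        by (rule powr_mono2') (use q0 e0 t in auto)
      have "\<bar>diff 4 t\<bar> = \<bar>\<Prod>k<4. (-q - real k)\<bar> * t powr (-q - 4)"
        by (simp add: diff_def abs_mult)
      also have "\<dots> \<le> 24 * \<epsilon> powr (-q - 4)"
        by (intro mult_mono pb tb) auto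
      finally show ?thesis by (simp add: K_def fact_numeral)
    qed
    then have "\<bar>diff 4 t / fact 4\<bar> * (x - P)^4 \<le> K * (x - P)^4"
      by (intro mult_right_mono) auto
    then have "\<bar>diff 4 t / fact 4 * (x - P)^4\<bar> \<le> K * (x - P)^4"
      by (simp add: abs_mult)
    then show ?thesis using eq s d0 by simp
  qed
  show ?thesis by (intro exI[of _ f3] exI[of _ K] allI impI main) auto
qed

context iid begin

lemma int_mult_bdd:
  fixes f g :: "'w \<Rightarrow> real"
  assumes "integrable S f" "g \<in> borel_measurable S" "\<And>\<omega>. \<bar>g \<omega>\<bar> \<le> B"
  shows "integrable S (\<lambda>\<omega>. f \<omega> * g \<omega>)"
proof (rule Bochner_Integration.integrable_bound[where f="\<lambda>\<omega>. B * f \<omega>"])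
  show "integrable S (\<lambda>\<omega>. B * f \<omega>)" using assms(1) by simp
  show "(\<lambda>\<omega>. f \<omega> * g \<omega>) \<in> borel_measurable S" using assms(1,2) by measurable
  have B0: "0 \<le> B" using assms(3)[of undefined] by simp
  show "AE \<omega> in S. norm (f \<omega> * g \<omega>) \<le> norm (B * f \<omega>)"
  proof (intro AE_I2)
    fix \<omega>
    have "\<bar>f \<omega>\<bar> * \<bar>g \<omega>\<bar> \<le> \<bar>f \<omega>\<bar> * B" by (intro mult_left_mono assms(3)) auto
    then show "norm (f \<omega> * g \<omega>) \<le> norm (B * f \<omega>)" using B0 by (simp add: abs_mult mult.commute)
  qed
qed

lemma int_bdd:
  fixes g :: "'w \<Rightarrow> real"
  assumes "g \<in> borel_measurable S" "\<And>\<omega>. \<bar>g \<omega>\<bar> \<le> B"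
  shows "integrable S g"
  by (rule integrable_const_bound[where B=B]) (use assms in auto)

lemma sum_meas[measurable]: "(\<lambda>\<omega>. \<Sum>m<M. (f::'z\<Rightarrow>real) (Z m \<omega>)) \<in> borel_measurable S"
  by (intro borel_measurable_sum fZ_meas)

lemma int_sumZ: "integrable (measure_pmf \<mu>) (\<lambda>z. (A z)^2) \<Longrightarrow> integrable S (\<lambda>\<omega>. \<Sum>m<M. (A::'z\<Rightarrow>real) (Z m \<omega>))"
  by (intro Bochner_Integration.integrable_sum intZ_sq_imp)

lemma E_sumZ: "integrable (measure_pmf \<mu>) (\<lambda>z. (A z)^2) \<Longrightarrow> integral\<^sup>L (measure_pmf \<mu>) A = 0 \<Longrightarrow>
   integral\<^sup>L S (\<lambda>\<omega>. \<Sum>m<M. (A::'z\<Rightarrow>real) (Z m \<omega>)) = 0"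
  by (subst Bochner_Integration.integral_sum) (auto intro: intZ_sq_imp simp: E_fZ)

lemma int_ggww:
  fixes A C :: "'z \<Rightarrow> real"
  assumes sA: "integrable (measure_pmf \<mu>) (\<lambda>z. (A z)^2)" and bC: "\<And>z. \<bar>C z\<bar> \<le> c"
  shows "integrable S (\<lambda>\<omega>. (\<Sum>i<M. A (Z i \<omega>)) * (\<Sum>j<M. A (Z j \<omega>)) * (\<Sum>k<M. C (Z k \<omega>)) * (\<Sum>l<M. C (Z l \<omega>)))"
  unfolding prod4_expand
  by (intro Bochner_Integration.integrable_sum) (rule int_prod4[OF sA sA], rule bC, rule bC)


lemma bias_real:
  fixes W G :: "'z \<Rightarrow> real" and q \<epsilon> :: real
  assumes e0: "0 < \<epsilon>" and Wge: "\<And>z. \<epsilon> \<le> W z" and Wle: "\<And>z. W z \<le> 1" and q0: "0 \<le> q" and q1: "q \<le> 1"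
    and sG: "integrable (measure_pmf \<mu>) (\<lambda>z. (G z)^2)"
  shows "\<exists>K. \<forall>M\<ge>1. \<bar>integral\<^sup>L S (\<lambda>\<omega>. (1 / (((\<Sum>m<M. W (Z m \<omega>)) / real M) powr q)) * ((1 / real M) * (\<Sum>m<M. G (Z m \<omega>))))
      - integral\<^sup>L (measure_pmf \<mu>) G * integral\<^sup>L (measure_pmf \<mu>) W powr (-q)
      - q / (real M * integral\<^sup>L (measure_pmf \<mu>) W powr (q+1)) * ((q+1)/2 * integral\<^sup>L (measure_pmf \<mu>) (\<lambda>z. (W z - integral\<^sup>L (measure_pmf \<mu>) W)^2)
          * (integral\<^sup>L (measure_pmf \<mu>) G / integral\<^sup>L (measure_pmf \<mu>) W)
          - integral\<^sup>L (measure_pmf \<mu>) (\<lambda>z. (W z - integral\<^sup>L (measure_pmf \<mu>) W) * (G z - integral\<^sup>L (measure_pmf \<mu>) G)))\<bar>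
     \<le> K / (real M)^2"
proof -
  define P where "P = integral\<^sup>L (measure_pmf \<mu>) W"
  define mG where "mG = integral\<^sup>L (measure_pmf \<mu>) G"
  define V where "V = integral\<^sup>L (measure_pmf \<mu>) (\<lambda>z. (W z - P)^2)"
  define Cv where "Cv = integral\<^sup>L (measure_pmf \<mu>) (\<lambda>z. (W z - P) * (G z - mG))"
  define W' where "W' z = W z - P" for z
  define G' where "G' z = G z - mG" for z
  have iW: "integrable (measure_pmf \<mu>) W"
  proof (rule measure_pmf.integrable_const_bound[where B=1])
    show "AE x in measure_pmf \<mu>. norm (W x) \<le> 1"
    proof (intro AE_I2)
      fix x have "0 \<le> W x" using Wge[of x] e0 by linarith
      then show "norm (W x) \<le> 1" using Wle[of x] by simp
    qed
  qed simp
  have iG: "integrable (measure_pmf \<mu>) G" by (rule int_sq_pmf_imp[OF sG])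
  have Pge: "\<epsilon> \<le> P" unfolding P_def by (rule measure_pmf.integral_ge_const) (use iW Wge in auto)
  have Ple: "P \<le> 1" unfolding P_def by (rule measure_pmf.integral_le_const) (use iW Wle in auto)
  have bW': "\<bar>W' z\<bar> \<le> 1" for z using Wge[of z] Wle[of z] Pge Ple e0 unfolding W'_def abs_le_iff by linarith
  have sW': "integrable (measure_pmf \<mu>) (\<lambda>z. (W' z)^2)" by (rule bdd_sq[OF bW'])
  have sG': "integrable (measure_pmf \<mu>) (\<lambda>z. (G' z)^2)"
    using sG iG by (simp add: G'_def power2_diff)
  have EW': "integral\<^sup>L (measure_pmf \<mu>) W' = 0" unfolding W'_def[abs_def] using iW by (simp add: P_def)
  have EG': "integral\<^sup>L (measure_pmf \<mu>) G' = 0" unfolding G'_def[abs_def] using iG by (simp add: mG_def)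
  have V': "integral\<^sup>L (measure_pmf \<mu>) (\<lambda>z. W' z * W' z) = V" by (simp add: V_def W'_def power2_eq_square)
  have C': "integral\<^sup>L (measure_pmf \<mu>) (\<lambda>z. G' z * W' z) = Cv" by (simp add: Cv_def W'_def G'_def mult.commute)
  obtain f3 Kt0 where tay0: "\<forall>x. \<epsilon> \<le> x \<and> x \<le> 1 \<longrightarrow>
     \<bar>1 / (x powr q) - (P powr (-q) - q * P powr (-q-1) * (x - P) + q * (q + 1) / 2 * P powr (-q-2) * (x - P)^2
        + f3 * (x - P)^3)\<bar> \<le> Kt0 * (x - P)^4"
    using taylor4_powr[OF e0 Pge Ple q0 q1] by blast
  define Kt where "Kt = \<bar>Kt0\<bar>"
  have Kt0: "0 \<le> Kt" by (simp add: Kt_def)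
  define f0 where "f0 = P powr (-q)"
  define f1 where "f1 = - q * P powr (-q-1)"
  define f2 where "f2 = q * (q + 1) / 2 * P powr (-q-2)"
  have tay: "\<bar>1 / (x powr q) - (f0 + f1 * (x - P) + f2 * (x - P)^2 + f3 * (x - P)^3)\<bar> \<le> Kt * (x - P)^4"
    if "\<epsilon> \<le> x" "x \<le> 1" for x
  proof -
    have "Kt0 * (x - P)^4 \<le> Kt * (x - P)^4" unfolding Kt_def by (intro mult_right_mono) auto
    moreover have "f0 + f1 * (x - P) + f2 * (x - P)^2 + f3 * (x - P)^3 = P powr (-q) - q * P powr (-q-1) * (x - P) + q * (q + 1) / 2 * P powr (-q-2) * (x - P)^2
        + f3 * (x - P)^3" by (simp add: f0_def f1_def f2_def)
    ultimately show ?thesis using tay0 that by auto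
  qed
  define K3 where "K3 = 1 * 1 * integral\<^sup>L (measure_pmf \<mu>) (\<lambda>z. \<bar>W' z\<bar>)"
  define K5 where "K5 = 1 * 1 * integral\<^sup>L (measure_pmf \<mu>) (\<lambda>z. \<bar>G' z\<bar>)"
  define K4 where "K4 = 3 * (1 * 1 * ((integral\<^sup>L (measure_pmf \<mu>) (\<lambda>z. (W' z)^2) + integral\<^sup>L (measure_pmf \<mu>) (\<lambda>z. (W' z)^2)) / 2))"
  define K6 where "K6 = 3 * (1 * 1 * ((integral\<^sup>L (measure_pmf \<mu>) (\<lambda>z. (G' z)^2) + integral\<^sup>L (measure_pmf \<mu>) (\<lambda>z. (G' z)^2)) / 2))"
  define K where "K = \<bar>mG * f3\<bar> * K3 + \<bar>mG\<bar> * Kt * K4 + \<bar>f2\<bar> * K5 + (\<bar>f3\<bar> + Kt) * (K6 + K4) / 2"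
  have "\<forall>M\<ge>1. \<bar>integral\<^sup>L S (\<lambda>\<omega>. (1 / (((\<Sum>m<M. W (Z m \<omega>)) / real M) powr q)) * ((1 / real M) * (\<Sum>m<M. G (Z m \<omega>))))
      - mG * P powr (-q) - q / (real M * P powr (q+1)) * ((q+1)/2 * V * (mG / P) - Cv)\<bar> \<le> K / (real M)^2"
  proof (intro allI impI)
    fix M :: nat assume M1: "1 \<le> M"
    define n where "n = real M"
    have n0: "0 < n" using M1 by (simp add: n_def)
    define SW where "SW = (\<lambda>\<omega>. \<Sum>m<M. W' (Z m \<omega>))"
    define SG where "SG = (\<lambda>\<omega>. \<Sum>m<M. G' (Z m \<omega>))"
    define u where "u = (\<lambda>\<omega>. SW \<omega> / n)"
    define h where "h = (\<lambda>\<omega>. SG \<omega> / n)"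
    have sumW: "(\<Sum>m<M. W (Z m \<omega>)) = SW \<omega> + n * P" for \<omega>
      by (simp add: SW_def W'_def sum_subtractf n_def)
    have sumG: "(\<Sum>m<M. G (Z m \<omega>)) = SG \<omega> + n * mG" for \<omega>
      by (simp add: SG_def G'_def sum_subtractf n_def)
    have SWb: "\<bar>SW \<omega>\<bar> \<le> n" for \<omega>
    proof -
      have "\<bar>SW \<omega>\<bar> \<le> (\<Sum>m<M. \<bar>W' (Z m \<omega>)\<bar>)" unfolding SW_def by (rule sum_abs)
      also have "\<dots> \<le> (\<Sum>m<M. 1)" by (intro sum_mono bW')
      finally show ?thesis by (simp add: n_def)
    qed
    have ub: "\<bar>u \<omega>\<bar> \<le> 1" for \<omega>
    proof -
      have "\<bar>u \<omega>\<bar> = \<bar>SW \<omega>\<bar> / n" using n0 by (simp add: u_def abs_divide)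
      also have "\<dots> \<le> n / n" by (intro divide_right_mono SWb) (use n0 in auto)
      finally show ?thesis using n0 by simp
    qed
    have nPu: "n * (P + u \<omega>) = (\<Sum>m<M. W (Z m \<omega>))" for \<omega>
      using n0 by (simp add: u_def sumW distrib_left)
    have Wbar: "(\<Sum>m<M. W (Z m \<omega>)) / real M = P + u \<omega>" for \<omega>
      using n0 by (simp add: nPu[symmetric] n_def[symmetric])
    have Gbar: "(1 / real M) * (\<Sum>m<M. G (Z m \<omega>)) = mG + h \<omega>" for \<omega>
      using n0 by (simp add: sumG h_def n_def[symmetric] distrib_left add_divide_distrib)
    have Wbar_ge: "\<epsilon> \<le> P + u \<omega>" for \<omega>
    proof -
      have "(\<Sum>m<M. \<epsilon>) \<le> (\<Sum>m<M. W (Z m \<omega>))" by (intro sum_mono Wge)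
      then have "n * \<epsilon> \<le> n * (P + u \<omega>)" using nPu[of \<omega>] by (simp add: n_def)
      then show ?thesis using n0 by simp
    qed
    have Wbar_le: "P + u \<omega> \<le> 1" for \<omega>
    proof -
      have "(\<Sum>m<M. W (Z m \<omega>)) \<le> (\<Sum>m<M. 1)" by (intro sum_mono Wle)
      then have "n * (P + u \<omega>) \<le> n * 1" using nPu[of \<omega>] by (simp add: n_def)
      then show ?thesis using n0 by simp
    qed
    define R where "R = (\<lambda>\<omega>. 1 / ((P + u \<omega>) powr q) - (f0 + f1 * u \<omega> + f2 * (u \<omega>)^2 + f3 * (u \<omega>)^3))"
    have Rb: "\<bar>R \<omega>\<bar> \<le> Kt * (u \<omega>)^4" for \<omega>
      using tay[OF Wbar_ge[of \<omega>] Wbar_le[of \<omega>]] by (simp add: R_def)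
    show "\<bar>integral\<^sup>L S (\<lambda>\<omega>. (1 / (((\<Sum>m<M. W (Z m \<omega>)) / real M) powr q)) * ((1 / real M) * (\<Sum>m<M. G (Z m \<omega>))))
      - mG * P powr (-q) - q / (real M * P powr (q+1)) * ((q+1)/2 * V * (mG / P) - Cv)\<bar> \<le> K / (real M)^2"
    proof -
    have mSW[measurable]: "SW \<in> borel_measurable S" unfolding SW_def by (rule sum_meas)
    have mSG[measurable]: "SG \<in> borel_measurable S" unfolding SG_def by (rule sum_meas)
    have mu[measurable]: "u \<in> borel_measurable S" unfolding u_def by measurable
    have mh[measurable]: "h \<in> borel_measurable S" unfolding h_def by measurable
    have mR[measurable]: "R \<in> borel_measurable S" unfolding R_def by measurable
    have iSW: "integrable S SW" unfolding SW_def by (rule int_sumZ[OF sW'])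
    have iSG: "integrable S SG" unfolding SG_def by (rule int_sumZ[OF sG'])
    have ih: "integrable S h" unfolding h_def using iSG by simp
    have iu: "integrable S u" by (rule int_bdd[OF mu ub])
    have ub2: "\<bar>(u \<omega>)^2\<bar> \<le> 1" for \<omega> using power_le_one[OF abs_ge_zero ub[of \<omega>], of 2] by (simp add: power_abs)
    have ub3: "\<bar>(u \<omega>)^3\<bar> \<le> 1" for \<omega> using power_le_one[OF abs_ge_zero ub[of \<omega>], of 3] by (simp add: power_abs)
    have ub4: "\<bar>(u \<omega>)^4\<bar> \<le> 1" for \<omega> using power_le_one[OF abs_ge_zero ub[of \<omega>], of 4] by (simp add: power_abs)
    have iu2: "integrable S (\<lambda>\<omega>. (u \<omega>)^2)" by (rule int_bdd[OF _ ub2]) measurable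
    have iu3: "integrable S (\<lambda>\<omega>. (u \<omega>)^3)" by (rule int_bdd[OF _ ub3]) measurable
    have iu4: "integrable S (\<lambda>\<omega>. (u \<omega>)^4)" by (rule int_bdd[OF _ ub4]) measurable
    have ihu: "integrable S (\<lambda>\<omega>. h \<omega> * u \<omega>)" by (rule int_mult_bdd[OF ih mu ub])
    have ihu2: "integrable S (\<lambda>\<omega>. h \<omega> * (u \<omega>)^2)" by (rule int_mult_bdd[OF ih _ ub2]) measurable
    have ihu3: "integrable S (\<lambda>\<omega>. h \<omega> * (u \<omega>)^3)" by (rule int_mult_bdd[OF ih _ ub3]) measurable
    have Rb1: "\<bar>R \<omega>\<bar> \<le> Kt" for \<omega>
    proof -
      have "Kt * (u \<omega>)^4 \<le> Kt * 1" using ub4[of \<omega>] Kt0 by (intro mult_left_mono) auto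
      then show ?thesis using Rb[of \<omega>] by simp
    qed
    have iR: "integrable S R" by (rule int_bdd[OF mR Rb1])
    have ihR: "integrable S (\<lambda>\<omega>. h \<omega> * R \<omega>)" by (rule int_mult_bdd[OF ih mR Rb1])
    have iggww: "integrable S (\<lambda>\<omega>. SG \<omega> * SG \<omega> * SW \<omega> * SW \<omega>)"
      unfolding SG_def SW_def by (rule int_ggww[OF sG' bW'])
    have ihu_sq: "integrable S (\<lambda>\<omega>. (h \<omega> * u \<omega>)^2)"
    proof -
      have "(\<lambda>\<omega>. (h \<omega> * u \<omega>)^2) = (\<lambda>\<omega>. (SG \<omega> * SG \<omega> * SW \<omega> * SW \<omega>) / n^4)"
        by (simp add: h_def u_def fun_eq_iff power2_eq_square power4_eq_xxxx mult_ac)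
      then show ?thesis using iggww by simp
    qed
    have m2w: "integral\<^sup>L S (\<lambda>\<omega>. SW \<omega> * SW \<omega>) = n * V"
      using mom2[OF sW' sW' EW', of M] unfolding SW_def n_def V' by simp
    have m2gw: "integral\<^sup>L S (\<lambda>\<omega>. SG \<omega> * SW \<omega>) = n * Cv"
      using mom2[OF sG' sW' EG', of M] unfolding SW_def SG_def n_def C' by simp
    have m3w: "\<bar>integral\<^sup>L S (\<lambda>\<omega>. SW \<omega> * SW \<omega> * SW \<omega>)\<bar> \<le> K3 * n"
      using mom3[OF sW' bW' bW' EW' EW' EW', of M] unfolding SW_def n_def K3_def by simp
    have m3gw: "\<bar>integral\<^sup>L S (\<lambda>\<omega>. SG \<omega> * SW \<omega> * SW \<omega>)\<bar> \<le> K5 * n"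
      using mom3[OF sG' bW' bW' EG' EW' EW', of M] unfolding SW_def SG_def n_def K5_def by simp
    have m4w: "\<bar>integral\<^sup>L S (\<lambda>\<omega>. SW \<omega> * SW \<omega> * SW \<omega> * SW \<omega>)\<bar> \<le> K4 * n^2"
      using mom4[OF sW' sW' bW' bW' EW' EW' EW' EW', of M] unfolding SW_def n_def K4_def by simp
    have m4gw: "\<bar>integral\<^sup>L S (\<lambda>\<omega>. SG \<omega> * SG \<omega> * SW \<omega> * SW \<omega>)\<bar> \<le> K6 * n^2"
      using mom4[OF sG' sG' bW' bW' EG' EG' EW' EW', of M] unfolding SW_def SG_def n_def K6_def by simp
    have Eu: "integral\<^sup>L S u = 0"
      using E_sumZ[OF sW' EW', of M] unfolding u_def SW_def by simp
    have Eh: "integral\<^sup>L S h = 0"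
      using E_sumZ[OF sG' EG', of M] unfolding h_def SG_def by simp
    have Eu2: "integral\<^sup>L S (\<lambda>\<omega>. (u \<omega>)^2) = V / n"
    proof -
      have "(\<lambda>\<omega>. (u \<omega>)^2) = (\<lambda>\<omega>. SW \<omega> * SW \<omega> / n^2)" by (simp add: u_def fun_eq_iff power2_eq_square)
      then show ?thesis using m2w n0 by (simp add: power2_eq_square)
    qed
    have Ehu: "integral\<^sup>L S (\<lambda>\<omega>. h \<omega> * u \<omega>) = Cv / n"
    proof -
      have "(\<lambda>\<omega>. h \<omega> * u \<omega>) = (\<lambda>\<omega>. SG \<omega> * SW \<omega> / n^2)" by (simp add: u_def h_def fun_eq_iff power2_eq_square)
      then show ?thesis using m2gw n0 by (simp add: power2_eq_square)
    qed
    have Eu3: "\<bar>integral\<^sup>L S (\<lambda>\<omega>. (u \<omega>)^3)\<bar> \<le> K3 / n^2"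
    proof -
      have "(\<lambda>\<omega>. (u \<omega>)^3) = (\<lambda>\<omega>. SW \<omega> * SW \<omega> * SW \<omega> / n^3)" by (simp add: u_def fun_eq_iff power3_eq_cube)
      then have "\<bar>integral\<^sup>L S (\<lambda>\<omega>. (u \<omega>)^3)\<bar> = \<bar>integral\<^sup>L S (\<lambda>\<omega>. SW \<omega> * SW \<omega> * SW \<omega>)\<bar> / n^3" using n0 by simp
      also have "\<dots> \<le> K3 * n / n^3" by (intro divide_right_mono m3w) (use n0 in auto)
      also have "\<dots> = K3 / n^2" using n0 by (simp add: power3_eq_cube power2_eq_square)
      finally show ?thesis .
    qed
    have Ehu2: "\<bar>integral\<^sup>L S (\<lambda>\<omega>. h \<omega> * (u \<omega>)^2)\<bar> \<le> K5 / n^2"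
    proof -
      have "(\<lambda>\<omega>. h \<omega> * (u \<omega>)^2) = (\<lambda>\<omega>. SG \<omega> * SW \<omega> * SW \<omega> / n^3)" by (simp add: u_def h_def fun_eq_iff power3_eq_cube power2_eq_square)
      then have "\<bar>integral\<^sup>L S (\<lambda>\<omega>. h \<omega> * (u \<omega>)^2)\<bar> = \<bar>integral\<^sup>L S (\<lambda>\<omega>. SG \<omega> * SW \<omega> * SW \<omega>)\<bar> / n^3" using n0 by simp
      also have "\<dots> \<le> K5 * n / n^3" by (intro divide_right_mono m3gw) (use n0 in auto)
      also have "\<dots> = K5 / n^2" using n0 by (simp add: power3_eq_cube power2_eq_square)
      finally show ?thesis .
    qed
    have Eu4: "integral\<^sup>L S (\<lambda>\<omega>. (u \<omega>)^4) \<le> K4 / n^2"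
    proof -
      have "(\<lambda>\<omega>. (u \<omega>)^4) = (\<lambda>\<omega>. SW \<omega> * SW \<omega> * SW \<omega> * SW \<omega> / n^4)" by (simp add: u_def fun_eq_iff power4_eq_xxxx)
      then have "integral\<^sup>L S (\<lambda>\<omega>. (u \<omega>)^4) = integral\<^sup>L S (\<lambda>\<omega>. SW \<omega> * SW \<omega> * SW \<omega> * SW \<omega>) / n^4" using n0 by simp
      also have "\<dots> \<le> K4 * n^2 / n^4" by (intro divide_right_mono order.trans[OF abs_ge_self m4w]) (use n0 in auto)
      also have "\<dots> = K4 / n^2" using n0 by (simp add: power4_eq_xxxx power2_eq_square)
      finally show ?thesis .
    qed
    have Ehu_sq: "integral\<^sup>L S (\<lambda>\<omega>. (h \<omega> * u \<omega>)^2) \<le> K6 / n^2"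
    proof -
      have "(\<lambda>\<omega>. (h \<omega> * u \<omega>)^2) = (\<lambda>\<omega>. SG \<omega> * SG \<omega> * SW \<omega> * SW \<omega> / n^4)" by (simp add: u_def h_def fun_eq_iff power4_eq_xxxx power2_eq_square mult_ac)
      then have "integral\<^sup>L S (\<lambda>\<omega>. (h \<omega> * u \<omega>)^2) = integral\<^sup>L S (\<lambda>\<omega>. SG \<omega> * SG \<omega> * SW \<omega> * SW \<omega>) / n^4" using n0 by simp
      also have "\<dots> \<le> K6 * n^2 / n^4" by (intro divide_right_mono order.trans[OF abs_ge_self m4gw]) (use n0 in auto)
      also have "\<dots> = K6 / n^2" using n0 by (simp add: power4_eq_xxxx power2_eq_square)
      finally show ?thesis .
    qed
    define main where "main = (\<lambda>\<omega>. mG*f0 + mG*f1*u \<omega> + f0*h \<omega> + mG*f2*(u \<omega>)^2 + f1*(h \<omega>*u \<omega>))"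
    define Err1 where "Err1 = (\<lambda>\<omega>. mG*f3*(u \<omega>)^3 + f2*(h \<omega>*(u \<omega>)^2))"
    define Err2 where "Err2 = (\<lambda>\<omega>. mG*R \<omega> + f3*(h \<omega>*(u \<omega>)^3) + h \<omega>*R \<omega>)"
    define B2 where "B2 = (\<lambda>\<omega>. \<bar>mG\<bar>*Kt*(u \<omega>)^4 + (\<bar>f3\<bar>+Kt) * (((h \<omega>*u \<omega>)^2 + (u \<omega>)^4)/2))"
    have Xeq: "(\<lambda>\<omega>. (1 / (((\<Sum>m<M. W (Z m \<omega>)) / real M) powr q)) * ((1 / real M) * (\<Sum>m<M. G (Z m \<omega>))))
       = (\<lambda>\<omega>. main \<omega> + Err1 \<omega> + Err2 \<omega>)"
    proof
      fix \<omega>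
      have "1 / ((P + u \<omega>) powr q) = f0 + f1 * u \<omega> + f2 * (u \<omega>)^2 + f3 * (u \<omega>)^3 + R \<omega>" by (simp add: R_def)
      then show "(1 / (((\<Sum>m<M. W (Z m \<omega>)) / real M) powr q)) * ((1 / real M) * (\<Sum>m<M. G (Z m \<omega>))) = main \<omega> + Err1 \<omega> + Err2 \<omega>"
        unfolding Wbar Gbar main_def Err1_def Err2_def by (simp add: algebra_simps)
    qed
    have imain: "integrable S main" unfolding main_def using iu ih iu2 ihu by simp
    have Emain: "integral\<^sup>L S main = mG*f0 + mG*f2*(V/n) + f1*(Cv/n)"
      unfolding main_def using iu ih iu2 ihu Eu Eh Eu2 Ehu by (simp add: prob_space)
    have iErr1: "integrable S Err1" unfolding Err1_def using iu3 ihu2 by simp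
    have EErr1: "integral\<^sup>L S Err1 = mG*f3*integral\<^sup>L S (\<lambda>\<omega>. (u \<omega>)^3) + f2*integral\<^sup>L S (\<lambda>\<omega>. h \<omega>*(u \<omega>)^2)"
      unfolding Err1_def using iu3 ihu2 by simp
    have iB2: "integrable S B2" unfolding B2_def using iu4 ihu_sq by simp
    have EB2: "integral\<^sup>L S B2 = \<bar>mG\<bar>*Kt*integral\<^sup>L S (\<lambda>\<omega>. (u \<omega>)^4) + (\<bar>f3\<bar>+Kt) * ((integral\<^sup>L S (\<lambda>\<omega>. (h \<omega>*u \<omega>)^2) + integral\<^sup>L S (\<lambda>\<omega>. (u \<omega>)^4))/2)"
      unfolding B2_def using iu4 ihu_sq by simp
    have Err2b: "\<bar>Err2 \<omega>\<bar> \<le> B2 \<omega>" for \<omega>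
    proof -
      define a where "a = \<bar>h \<omega>\<bar>"
      define b where "b = \<bar>u \<omega>\<bar>"
      have a0: "0 \<le> a" and b0: "0 \<le> b" and b1: "b \<le> 1" using ub[of \<omega>] by (auto simp: a_def b_def)
      have key: "a * b^3 \<le> ((a*b)^2 + b^4)/2"
      proof -
        have "0 \<le> (a*b - b^2)^2" by simp
        then show ?thesis by (simp add: power2_eq_square power3_eq_cube power4_eq_xxxx algebra_simps)
      qed
      have b43: "b^4 \<le> b^3" using b0 b1 by (simp add: power_decreasing)
      have t1: "\<bar>mG * R \<omega>\<bar> \<le> \<bar>mG\<bar>*Kt*(u \<omega>)^4" using Rb[of \<omega>] by (simp add: abs_mult mult_left_mono mult.assoc)
      have t2: "\<bar>f3*(h \<omega>*(u \<omega>)^3)\<bar> \<le> \<bar>f3\<bar> * (a * b^3)" by (simp add: abs_mult a_def b_def power_abs)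
      have t3: "\<bar>h \<omega>*R \<omega>\<bar> \<le> Kt * (a * b^3)"
      proof -
        have "\<bar>h \<omega>*R \<omega>\<bar> \<le> a * (Kt * b^4)" using Rb[of \<omega>] a0 by (simp add: abs_mult a_def b_def mult_left_mono power_abs[symmetric] power_even_abs)
        also have "\<dots> \<le> a * (Kt * b^3)" using b43 a0 Kt0 by (intro mult_left_mono) auto
        finally show ?thesis by (simp add: mult_ac)
      qed
      have "\<bar>Err2 \<omega>\<bar> \<le> \<bar>mG\<bar>*Kt*(u \<omega>)^4 + (\<bar>f3\<bar> + Kt) * (a * b^3)"
        unfolding Err2_def using t1 t2 t3 by (simp add: algebra_simps)
      also have "\<dots> \<le> \<bar>mG\<bar>*Kt*(u \<omega>)^4 + (\<bar>f3\<bar> + Kt) * (((a*b)^2 + b^4)/2)"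
        using key Kt0 by (intro add_left_mono mult_left_mono) auto
      also have "\<dots> = B2 \<omega>" by (simp add: B2_def a_def b_def power_mult_distrib power_even_abs abs_mult[symmetric])
      finally show ?thesis .
    qed
    have mErr2[measurable]: "Err2 \<in> borel_measurable S" unfolding Err2_def by measurable
    have iErr2: "integrable S Err2"
      by (rule Bochner_Integration.integrable_bound[OF iB2 mErr2]) (use Err2b in \<open>auto intro!: AE_I2 intro: order.trans[OF _ abs_ge_self]\<close>)
    have EErr2: "\<bar>integral\<^sup>L S Err2\<bar> \<le> (\<bar>mG\<bar>*Kt*K4 + (\<bar>f3\<bar>+Kt)*(K6+K4)/2) / n^2"
    proof -
      have "\<bar>integral\<^sup>L S Err2\<bar> \<le> integral\<^sup>L S (\<lambda>\<omega>. \<bar>Err2 \<omega>\<bar>)" by (rule integral_abs_bound)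
      also have "\<dots> \<le> integral\<^sup>L S B2" by (rule integral_mono) (use iErr2 iB2 Err2b in auto)
      also have "\<dots> \<le> \<bar>mG\<bar>*Kt*(K4/n^2) + (\<bar>f3\<bar>+Kt) * ((K6/n^2 + K4/n^2)/2)"
        unfolding EB2 using Eu4 Ehu_sq Kt0
        by (intro add_mono mult_left_mono divide_right_mono) auto
      also have "\<dots> = (\<bar>mG\<bar>*Kt*K4 + (\<bar>f3\<bar>+Kt)*(K6+K4)/2) / n^2" using n0 by (simp add: add_divide_distrib diff_divide_distrib algebra_simps)
      finally show ?thesis .
    qed
    have EErr1b: "\<bar>integral\<^sup>L S Err1\<bar> \<le> (\<bar>mG*f3\<bar>*K3 + \<bar>f2\<bar>*K5) / n^2"
    proof -
      have "\<bar>integral\<^sup>L S Err1\<bar> \<le> \<bar>mG*f3\<bar>*\<bar>integral\<^sup>L S (\<lambda>\<omega>. (u \<omega>)^3)\<bar> + \<bar>f2\<bar>*\<bar>integral\<^sup>L S (\<lambda>\<omega>. h \<omega>*(u \<omega>)^2)\<bar>"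
        unfolding EErr1 by (rule order.trans[OF abs_triangle_ineq]) (simp add: abs_mult)
      also have "\<dots> \<le> \<bar>mG*f3\<bar>*(K3/n^2) + \<bar>f2\<bar>*(K5/n^2)"
        by (intro add_mono mult_left_mono Eu3 Ehu2) auto
      also have "\<dots> = (\<bar>mG*f3\<bar>*K3 + \<bar>f2\<bar>*K5) / n^2" by (simp add: add_divide_distrib)
      finally show ?thesis .
    qed
    have P0: "0 < P" using e0 Pge by simp
    have LI: "q / (real M * P powr (q+1)) * ((q+1)/2 * V * (mG / P) - Cv) = mG*f2*(V/n) + f1*(Cv/n)"
    proof -
      have p1: "P powr (-q-1) = 1 / P powr (q+1)" by (simp add: powr_minus_divide[symmetric])
      have p2: "P powr (-q-2) = 1 / (P powr (q+1) * P)"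
      proof -
        have "P powr (q+2) = P powr ((q+1) + 1)" by (simp add: add.assoc)
        also have "\<dots> = P powr (q+1) * P powr 1" by (rule powr_add)
        also have "\<dots> = P powr (q+1) * P" using P0 by simp
        finally have "P powr (q+2) = P powr (q+1) * P" .
        moreover have "P powr (-q-2) = 1 / P powr (q+2)" by (simp add: powr_minus_divide[symmetric])
        ultimately show ?thesis by simp
      qed
      have pw0: "0 < P powr (q+1)" using P0 by simp
      have "q / (n * P powr (q+1)) * ((q+1)/2 * V * (mG / P) - Cv) = mG*(q * (q + 1) / 2 * (1 / (P powr (q+1) * P)))*(V/n) + (- q * (1 / P powr (q+1)))*(Cv/n)"
        using pw0 P0 n0 by (simp add: field_simps)
      then show ?thesis unfolding f1_def f2_def p1 p2 n_def .
    qed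
    have "\<bar>integral\<^sup>L S (\<lambda>\<omega>. (1 / (((\<Sum>m<M. W (Z m \<omega>)) / real M) powr q)) * ((1 / real M) * (\<Sum>m<M. G (Z m \<omega>))))
      - mG * P powr (-q) - q / (real M * P powr (q+1)) * ((q+1)/2 * V * (mG / P) - Cv)\<bar>
       = \<bar>integral\<^sup>L S Err1 + integral\<^sup>L S Err2\<bar>"
      unfolding Xeq LI using imain iErr1 iErr2 by (simp add: Emain f0_def)
    also have "\<dots> \<le> (\<bar>mG*f3\<bar>*K3 + \<bar>f2\<bar>*K5) / n^2 + (\<bar>mG\<bar>*Kt*K4 + (\<bar>f3\<bar>+Kt)*(K6+K4)/2) / n^2"
      using EErr1b EErr2 by linarith
    also have "\<dots> = K / (real M)^2" unfolding add_divide_distrib[symmetric] K_def n_def by (simp add: algebra_simps)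
    finally show ?thesis .
    qed
  qed
  then show ?thesis unfolding P_def mG_def V_def Cv_def by blast
qed

end

context iid begin

lemma sq_subseq_AE:
  fixes A :: "'z \<Rightarrow> real"
  assumes sA: "integrable (measure_pmf \<mu>) (\<lambda>z. (A z)^2)" and EA: "integral\<^sup>L (measure_pmf \<mu>) A = 0"
  shows "AE \<omega> in S. (\<lambda>k. (\<Sum>m<(Suc k)^2. A (Z m \<omega>)) / real ((Suc k)^2)) \<longlonglongrightarrow> 0"
proof -
  define f where "f k \<omega> = (\<Sum>m<(Suc k)^2. A (Z m \<omega>)) / real ((Suc k)^2)" for k \<omega>
  define \<sigma> where "\<sigma> = integral\<^sup>L (measure_pmf \<mu>) (\<lambda>z. A z * A z)"
  have fm[measurable]: "f k \<in> borel_measurable S" for k unfolding f_def by measurable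
  have Ef: "expectation (f k) = 0" for k
    unfolding f_def using E_sumZ[OF sA EA] by simp
  have f2: "(\<lambda>\<omega>. (f k \<omega>)^2) = (\<lambda>\<omega>. (\<Sum>m<(Suc k)^2. A (Z m \<omega>)) * (\<Sum>m<(Suc k)^2. A (Z m \<omega>)) / (real ((Suc k)^2))^2)" for k
    by (simp add: f_def fun_eq_iff power2_eq_square)
  have if2: "integrable S (\<lambda>\<omega>. (f k \<omega>)^2)" for k
  proof -
    have "integrable S (\<lambda>\<omega>. (\<Sum>m<(Suc k)^2. A (Z m \<omega>)) * (\<Sum>m<(Suc k)^2. A (Z m \<omega>)))"
      unfolding sum_product by (intro Bochner_Integration.integrable_sum int_prod2[OF sA sA])
    then show ?thesis unfolding f2 by simp
  qed
  have Vf: "variance (f k) = \<sigma> / real ((Suc k)^2)" for k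
  proof -
    have "variance (f k) = integral\<^sup>L S (\<lambda>\<omega>. (f k \<omega>)^2)" using Ef by simp
    also have "\<dots> = real ((Suc k)^2) * \<sigma> / (real ((Suc k)^2))^2"
      unfolding f2 using mom2[OF sA sA EA, of "(Suc k)^2"] by (simp add: \<sigma>_def)
    also have "\<dots> = \<sigma> / real ((Suc k)^2)" by (simp add: power2_eq_square)
    finally show ?thesis .
  qed
  have sumi: "summable (\<lambda>k. 1 / real ((Suc k)^2))"
  proof -
    have "summable (\<lambda>n. inverse (real n ^ 2))" by (rule inverse_power_summable) simp
    then have "summable (\<lambda>k. inverse (real (Suc k) ^ 2))" by (subst summable_Suc_iff)
    then show ?thesis by (simp add: divide_inverse)
  qed
  have ev: "AE \<omega> in S. eventually (\<lambda>k. \<bar>f k \<omega>\<bar> < 1 / real (Suc j)) sequentially" for j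
  proof -
    define \<delta> where "\<delta> = 1 / real (Suc j)"
    have d0: "0 < \<delta>" by (simp add: \<delta>_def)
    define B where "B k = {\<omega> \<in> space S. \<delta> \<le> \<bar>f k \<omega>\<bar>}" for k
    have Bs[measurable]: "B k \<in> sets S" for k unfolding B_def by measurable
    have pB: "measure S (B k) \<le> (\<sigma> / \<delta>^2) * (1 / real ((Suc k)^2))" for k
    proof -
      have "prob {x \<in> space S. \<delta> \<le> \<bar>f k x - expectation (f k)\<bar>} \<le> variance (f k) / \<delta>^2"
        by (rule Chebyshev_inequality) (use if2 d0 in auto)
      then have "prob {x \<in> space S. \<delta> \<le> \<bar>f k x\<bar>} \<le> (\<sigma> / real ((Suc k)^2)) / \<delta>^2"
        unfolding Vf by (simp only: Ef diff_zero)
      then show ?thesis unfolding B_def by (simp add: divide_inverse mult_ac)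
    qed
    have "summable (\<lambda>k. measure S (B k))"
      by (rule summable_comparison_test'[OF summable_mult[OF sumi, of "\<sigma> / \<delta>^2"]]) (use pB in auto)
    then have "AE \<omega> in S. eventually (\<lambda>k. \<omega> \<in> space S - B k) sequentially"
      by (intro borel_cantelli_AE1) (auto simp: emeasure_eq_measure)
    then show ?thesis
      by (rule AE_mp) (auto intro!: AE_I2 elim!: eventually_mono simp: B_def \<delta>_def not_le)
  qed
  have "AE \<omega> in S. \<forall>j. eventually (\<lambda>k. \<bar>f k \<omega>\<bar> < 1 / real (Suc j)) sequentially"
    using ev by (simp add: AE_all_countable)
  then have "AE \<omega> in S. (\<lambda>k. f k \<omega>) \<longlonglongrightarrow> 0"
  proof (rule AE_mp, intro AE_I2 impI)
    fix \<omega> assume H: "\<forall>j. eventually (\<lambda>k. \<bar>f k \<omega>\<bar> < 1 / real (Suc j)) sequentially"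
    show "(\<lambda>k. f k \<omega>) \<longlonglongrightarrow> 0"
    proof (rule tendstoI)
      fix e :: real assume "0 < e"
      then obtain j where j: "inverse (real (Suc j)) < e" using reals_Archimedean by blast
      show "eventually (\<lambda>k. dist (f k \<omega>) 0 < e) sequentially"
        using H[rule_format, of j] by (rule eventually_mono) (use j in \<open>auto simp: divide_inverse\<close>)
    qed
  qed
  then show ?thesis unfolding f_def .
qed


lemma slln_nonneg:
  fixes X :: "'z \<Rightarrow> real"
  assumes sX: "integrable (measure_pmf \<mu>) (\<lambda>z. (X z)^2)" and X0: "\<And>z. 0 \<le> X z"
  shows "AE \<omega> in S. (\<lambda>n. (\<Sum>m<n. X (Z m \<omega>)) / real n) \<longlonglongrightarrow> integral\<^sup>L (measure_pmf \<mu>) X"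
proof -
  define mX where "mX = integral\<^sup>L (measure_pmf \<mu>) X"
  define A where "A z = X z - mX" for z
  have iX: "integrable (measure_pmf \<mu>) X" by (rule int_sq_pmf_imp[OF sX])
  have sA: "integrable (measure_pmf \<mu>) (\<lambda>z. (A z)^2)" using sX iX by (simp add: A_def power2_diff)
  have EA: "integral\<^sup>L (measure_pmf \<mu>) A = 0" unfolding A_def[abs_def] using iX by (simp add: mX_def)
  define T where "T k \<omega> = (\<Sum>m<k^2. X (Z m \<omega>)) / real (k^2)" for k \<omega>
  have TA: "T (Suc k) \<omega> = (\<Sum>m<(Suc k)^2. A (Z m \<omega>)) / real ((Suc k)^2) + mX" for k \<omega>
  proof -
    have "(\<Sum>m<(Suc k)^2. A (Z m \<omega>)) = (\<Sum>m<(Suc k)^2. X (Z m \<omega>)) - real ((Suc k)^2) * mX"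
      by (simp add: A_def sum_subtractf)
    moreover have "real ((Suc k)^2) \<noteq> 0" by simp
    ultimately show ?thesis unfolding T_def by (simp add: field_simps)
  qed
  have "AE \<omega> in S. (\<lambda>k. T k \<omega>) \<longlonglongrightarrow> mX"
    using sq_subseq_AE[OF sA EA]
  proof (rule AE_mp, intro AE_I2 impI)
    fix \<omega> assume "(\<lambda>k. (\<Sum>m<(Suc k)^2. A (Z m \<omega>)) / real ((Suc k)^2)) \<longlonglongrightarrow> 0"
    then have "(\<lambda>k. (\<Sum>m<(Suc k)^2. A (Z m \<omega>)) / real ((Suc k)^2) + mX) \<longlonglongrightarrow> 0 + mX"
      by (intro tendsto_add) auto
    then have "(\<lambda>k. T (Suc k) \<omega>) \<longlonglongrightarrow> mX" unfolding TA by simp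
    then show "(\<lambda>k. T k \<omega>) \<longlonglongrightarrow> mX" by (rule LIMSEQ_imp_Suc)
  qed
  then show ?thesis
  proof (rule AE_mp, intro AE_I2 impI)
    fix \<omega> assume HT: "(\<lambda>k. T k \<omega>) \<longlonglongrightarrow> mX"
    define Sn where "Sn n = (\<Sum>m<n. X (Z m \<omega>))" for n
    have Smono: "Sn a \<le> Sn b" if "a \<le> b" for a b
      unfolding Sn_def by (rule sum_mono2) (use that X0 in auto)
    have S0: "0 \<le> Sn n" for n unfolding Sn_def by (intro sum_nonneg X0)
    define lo where "lo k = T k \<omega> * ((real k / real (Suc k))^2)" for k
    define up where "up k = T (Suc k) \<omega> * ((real (Suc k) / real k)^2)" for k
    have lo_lim: "lo \<longlonglongrightarrow> mX * 1^2" unfolding lo_def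
      by (intro tendsto_mult tendsto_power HT LIMSEQ_n_over_Suc_n)
    have up_lim: "up \<longlonglongrightarrow> mX * 1^2" unfolding up_def
      by (intro tendsto_mult tendsto_power LIMSEQ_Suc[OF HT] LIMSEQ_Suc_n_over_n)
    have fs: "filterlim floor_sqrt at_top sequentially"
      unfolding filterlim_at_top
    proof (intro allI eventually_sequentiallyI)
      fix K n :: nat assume "K^2 \<le> n" then show "K \<le> floor_sqrt n" by (rule le_floor_sqrtI)
    qed
    have lo2: "(\<lambda>n. lo (floor_sqrt n)) \<longlonglongrightarrow> mX" using filterlim_compose[OF lo_lim fs] by simp
    have up2: "(\<lambda>n. up (floor_sqrt n)) \<longlonglongrightarrow> mX" using filterlim_compose[OF up_lim fs] by simp
    have bounds: "lo (floor_sqrt n) \<le> Sn n / real n \<and> Sn n / real n \<le> up (floor_sqrt n)" if n1: "1 \<le> n" for n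
    proof -
      define k where "k = floor_sqrt n"
      have k1: "1 \<le> k" using n1 by (simp add: k_def Suc_le_eq)
      have kn: "k^2 \<le> n" by (simp add: k_def)
      have nk: "n < (Suc k)^2" by (simp add: k_def Suc_floor_sqrt_power2_gt)
      have rk: "real (k^2) \<le> real n" "real n \<le> real ((Suc k)^2)" using kn nk by linarith+
      have rk0: "0 < real (k^2)" using k1 by simp
      have "lo k = Sn (k^2) / real ((Suc k)^2)"
        unfolding lo_def T_def Sn_def using k1 by (simp add: power_divide field_simps)
      also have "\<dots> \<le> Sn n / real ((Suc k)^2)" by (intro divide_right_mono Smono kn) simp
      also have "\<dots> \<le> Sn n / real n" by (rule divide_left_mono) (use S0 rk rk0 n1 in auto)
      finally have L: "lo k \<le> Sn n / real n" .
      have "Sn n / real n \<le> Sn ((Suc k)^2) / real n" by (intro divide_right_mono Smono) (use nk in auto)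
      also have "\<dots> \<le> Sn ((Suc k)^2) / real (k^2)" by (rule divide_left_mono) (use S0 rk rk0 n1 in auto)
      also have "\<dots> = up k"
        unfolding up_def T_def Sn_def using k1 by (simp add: power_divide field_simps)
      finally have U: "Sn n / real n \<le> up k" .
      show ?thesis using L U by (simp add: k_def)
    qed
    show "(\<lambda>n. (\<Sum>m<n. X (Z m \<omega>)) / real n) \<longlonglongrightarrow> integral\<^sup>L (measure_pmf \<mu>) X"
      unfolding mX_def[symmetric] Sn_def[symmetric]
      by (rule tendsto_sandwich[OF _ _ lo2 up2]) (use bounds in \<open>auto intro!: eventually_sequentiallyI[of 1]\<close>)
  qed
qed


lemma slln_real:
  fixes X :: "'z \<Rightarrow> real"
  assumes sX: "integrable (measure_pmf \<mu>) (\<lambda>z. (X z)^2)"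
  shows "AE \<omega> in S. (\<lambda>n. (\<Sum>m<n. X (Z m \<omega>)) / real n) \<longlonglongrightarrow> integral\<^sup>L (measure_pmf \<mu>) X"
proof -
  define Xp where "Xp z = max (X z) 0" for z
  define Xn where "Xn z = max (- X z) 0" for z
  have sq: "integrable (measure_pmf \<mu>) (\<lambda>z. (Y z)^2)" if "\<And>z. \<bar>Y z\<bar> \<le> \<bar>X z\<bar>" for Y :: "'z \<Rightarrow> real"
  proof (rule Bochner_Integration.integrable_bound[OF sX])
    show "AE x in measure_pmf \<mu>. norm ((Y x)^2) \<le> norm ((X x)^2)"
      using that by (auto intro!: AE_I2 simp: abs_le_square_iff)
  qed simp
  have sp: "integrable (measure_pmf \<mu>) (\<lambda>z. (Xp z)^2)" by (rule sq) (auto simp: Xp_def)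
  have sn: "integrable (measure_pmf \<mu>) (\<lambda>z. (Xn z)^2)" by (rule sq) (auto simp: Xn_def)
  have eq: "X z = Xp z - Xn z" for z by (simp add: Xp_def Xn_def max_def)
  have EX: "integral\<^sup>L (measure_pmf \<mu>) X = integral\<^sup>L (measure_pmf \<mu>) Xp - integral\<^sup>L (measure_pmf \<mu>) Xn"
  proof -
    have "X = (\<lambda>z. Xp z - Xn z)" using eq by auto
    then show ?thesis using int_sq_pmf_imp[OF sp] int_sq_pmf_imp[OF sn] by simp
  qed
  have "AE \<omega> in S. (\<lambda>n. (\<Sum>m<n. Xp (Z m \<omega>)) / real n) \<longlonglongrightarrow> integral\<^sup>L (measure_pmf \<mu>) Xp"
    by (rule slln_nonneg[OF sp]) (simp add: Xp_def)
  moreover have "AE \<omega> in S. (\<lambda>n. (\<Sum>m<n. Xn (Z m \<omega>)) / real n) \<longlonglongrightarrow> integral\<^sup>L (measure_pmf \<mu>) Xn"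
    by (rule slln_nonneg[OF sn]) (simp add: Xn_def)
  ultimately show ?thesis
  proof eventually_elim
    case (elim \<omega>)
    have "(\<lambda>n. (\<Sum>m<n. Xp (Z m \<omega>)) / real n - (\<Sum>m<n. Xn (Z m \<omega>)) / real n) \<longlonglongrightarrow>
       integral\<^sup>L (measure_pmf \<mu>) Xp - integral\<^sup>L (measure_pmf \<mu>) Xn"
      by (intro tendsto_diff elim)
    moreover have "(\<Sum>m<n. Xp (Z m \<omega>)) / real n - (\<Sum>m<n. Xn (Z m \<omega>)) / real n = (\<Sum>m<n. X (Z m \<omega>)) / real n" for n
      by (simp add: eq sum_subtractf diff_divide_distrib)
    ultimately show ?case unfolding EX by simp
  qed
qed

lemma slln_vec:
  fixes g :: "'z \<Rightarrow> 'a::euclidean_space"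
  assumes sg: "integrable (measure_pmf \<mu>) (\<lambda>z. (norm (g z))^2)"
  shows "AE \<omega> in S. (\<lambda>n. (1 / real n) *\<^sub>R (\<Sum>m<n. g (Z m \<omega>))) \<longlonglongrightarrow> integral\<^sup>L (measure_pmf \<mu>) g"
proof -
  have ig: "integrable (measure_pmf \<mu>) g"
  proof -
    have "integrable (measure_pmf \<mu>) (\<lambda>z. norm (g z))"
      by (rule measure_pmf.square_integrable_imp_integrable[OF _ sg]) simp
    then show ?thesis by (subst integrable_norm_iff[symmetric]) auto
  qed
  have comp: "AE \<omega> in S. (\<lambda>n. (\<Sum>m<n. g (Z m \<omega>) \<bullet> b) / real n) \<longlonglongrightarrow> integral\<^sup>L (measure_pmf \<mu>) g \<bullet> b"
    if b: "b \<in> Basis" for b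
  proof -
    have s: "integrable (measure_pmf \<mu>) (\<lambda>z. (g z \<bullet> b)^2)"
    proof (rule Bochner_Integration.integrable_bound[OF sg])
      show "AE x in measure_pmf \<mu>. norm ((g x \<bullet> b)^2) \<le> norm ((norm (g x))^2)"
        using Basis_le_norm[OF b] by (auto intro!: AE_I2 simp flip: abs_le_square_iff)
    qed simp
    have "integral\<^sup>L (measure_pmf \<mu>) (\<lambda>z. g z \<bullet> b) = integral\<^sup>L (measure_pmf \<mu>) g \<bullet> b"
      using ig by simp
    then show ?thesis using slln_real[OF s] by simp
  qed
  have "AE \<omega> in S. \<forall>b\<in>Basis. (\<lambda>n. (\<Sum>m<n. g (Z m \<omega>) \<bullet> b) / real n) \<longlonglongrightarrow> integral\<^sup>L (measure_pmf \<mu>) g \<bullet> b"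
    by (rule AE_finite_allI) (auto intro: comp)
  then show ?thesis
  proof (rule AE_mp, intro AE_I2 impI)
    fix \<omega> assume H: "\<forall>b\<in>Basis. (\<lambda>n. (\<Sum>m<n. g (Z m \<omega>) \<bullet> b) / real n) \<longlonglongrightarrow> integral\<^sup>L (measure_pmf \<mu>) g \<bullet> b"
    have "(\<lambda>n. \<Sum>b\<in>Basis. ((\<Sum>m<n. g (Z m \<omega>) \<bullet> b) / real n) *\<^sub>R b) \<longlonglongrightarrow> (\<Sum>b\<in>Basis. (integral\<^sup>L (measure_pmf \<mu>) g \<bullet> b) *\<^sub>R b)"
      using H by (intro tendsto_sum tendsto_scaleR) auto
    moreover have "(\<Sum>b\<in>Basis. ((\<Sum>m<n. g (Z m \<omega>) \<bullet> b) / real n) *\<^sub>R b) = (1 / real n) *\<^sub>R (\<Sum>m<n. g (Z m \<omega>))" for n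
    proof -
      have "(1 / real n) *\<^sub>R (\<Sum>m<n. g (Z m \<omega>)) = (\<Sum>b\<in>Basis. (((1 / real n) *\<^sub>R (\<Sum>m<n. g (Z m \<omega>))) \<bullet> b) *\<^sub>R b)"
        by (rule euclidean_representation[symmetric])
      also have "\<dots> = (\<Sum>b\<in>Basis. ((\<Sum>m<n. g (Z m \<omega>) \<bullet> b) / real n) *\<^sub>R b)"
        by (simp add: inner_sum_left)
      finally show ?thesis ..
    qed
    ultimately show "(\<lambda>n. (1 / real n) *\<^sub>R (\<Sum>m<n. g (Z m \<omega>))) \<longlonglongrightarrow> integral\<^sup>L (measure_pmf \<mu>) g"
      by (simp add: euclidean_representation)
  qed
qed

end

theorem mainTheorem11:
  fixes pz :: "'a::euclidean_space \<Rightarrow> 'z::countable pmf"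
    and w :: "'a \<Rightarrow> 'z \<Rightarrow> real"
    and \<theta>0 :: 'a and L :: "'z \<Rightarrow> 'a" and DP :: 'a
    and q \<epsilon> :: real
    and S :: "'w measure" and Z :: "nat \<Rightarrow> 'w \<Rightarrow> 'z"
  defines "P \<equiv> marg pz w \<theta>0"
    and "wt \<equiv> (\<lambda>z. w \<theta>0 z)"
    and "gt \<equiv> (\<lambda>z. - (w \<theta>0 z *\<^sub>R L z))"
  assumes q_range: "0 \<le> q" "q \<le> 1"
    and w_prob: "\<forall>\<theta> z. 0 \<le> w \<theta> z \<and> w \<theta> z \<le> 1"
    and L_grad: "\<forall>z \<in> set_pmf (pz \<theta>0).
                   GDERIV (\<lambda>\<theta>. ln (pmf (pz \<theta>) z * w \<theta> z)) \<theta>0 :> L z"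
    and P_grad: "GDERIV (marg pz w) \<theta>0 :> DP"
    and P_pos: "P > 0"
    and S_prob: "prob_space S"
    and Z_indep: "prob_space.indep_vars S (\<lambda>_. count_space UNIV) Z UNIV"
    and Z_distr: "\<forall>m. distr S (count_space UNIV) (Z m) = measure_pmf (pz \<theta>0)"
    and g_sq: "\<forall>m. integrable S (\<lambda>\<omega>. (norm (gt (Z m \<omega>)))\<^sup>2)"
    and eps_pos: "\<epsilon> > 0"
    and w_ge_eps: "\<forall>m. AE \<omega> in S. \<epsilon> \<le> wt (Z m \<omega>)"
    and E_w: "\<forall>m. integral\<^sup>L S (\<lambda>\<omega>. wt (Z m \<omega>)) = P"
    and E_g: "\<forall>m. integral\<^sup>L S (\<lambda>\<omega>. gt (Z m \<omega>)) = - DP"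
  shows "(AE \<omega> in S. (\<lambda>M. est q wt gt Z M \<omega>) \<longlonglongrightarrow> grad_ell q P DP)
       \<and> (\<forall>M\<ge>1. integrable S (est q wt gt Z M))
       \<and> (\<lambda>M. norm (integral\<^sup>L S (est q wt gt Z M) - grad_ell q P DP - lead_term q P DP (rvar S (\<lambda>\<omega>. wt (Z 0 \<omega>))) (rcov S (\<lambda>\<omega>. gt (Z 0 \<omega>)) (\<lambda>\<omega>. wt (Z 0 \<omega>))) M))
            \<in> O(\<lambda>M. 1 / (real M)\<^sup>2)
       \<and> (\<forall>C C'. norm ((1 / P) *\<^sub>R DP) \<le> C
                 \<and> (\<forall>z \<in> set_pmf (pz \<theta>0). norm (L z) \<le> C')
                 \<longrightarrow> (\<forall>M\<ge>1. norm (lead_term q P DP (rvar S (\<lambda>\<omega>. wt (Z 0 \<omega>))) (rcov S (\<lambda>\<omega>. gt (Z 0 \<omega>)) (\<lambda>\<omega>. wt (Z 0 \<omega>))) M) \<le> (C + C') * (q / (real M * P powr q))))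
       \<and> (q = 0 \<longrightarrow> (\<forall>M\<ge>1. integral\<^sup>L S (est q wt gt Z M) = grad_ell q P DP))"
proof -
  define \<mu> where "\<mu> = pz \<theta>0"
  interpret I: iid S Z \<mu>
    unfolding iid_def iid_axioms_def \<mu>_def using S_prob Z_indep Z_distr by auto
  have AEeps: "AE \<omega> in S. \<forall>m. \<epsilon> \<le> wt (Z m \<omega>)" using w_ge_eps by (simp add: AE_all_countable)
  have e1: "\<epsilon> \<le> 1"
  proof -
    have "AE \<omega> in S. \<epsilon> \<le> 1" using w_ge_eps[rule_format, of 0]
      by eventually_elim (use w_prob in \<open>auto simp: wt_def intro: order.trans\<close>)
    then show ?thesis by simp
  qed
  define wt' where "wt' z = max \<epsilon> (wt z)" for z
  have wt'_ge: "\<epsilon> \<le> wt' z" for z by (simp add: wt'_def)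
  have wt'_le: "wt' z \<le> 1" for z using e1 w_prob by (simp add: wt'_def wt_def)
  have wt_eq: "wt' (Z m \<omega>) = wt (Z m \<omega>)" if "\<forall>m. \<epsilon> \<le> wt (Z m \<omega>)" for m \<omega>
    using that by (simp add: wt'_def)
  have est_eq: "est q wt gt Z M \<omega> = est q wt' gt Z M \<omega>" if "\<forall>m. \<epsilon> \<le> wt (Z m \<omega>)" for M \<omega>
    unfolding est_def Let_def using wt_eq[OF that] by simp
  have AEest: "AE \<omega> in S. est q wt gt Z M \<omega> = est q wt' gt Z M \<omega>" for M
    using AEeps by eventually_elim (rule est_eq)
  have sg: "integrable (measure_pmf \<mu>) (\<lambda>z. (norm (gt z))^2)"
    using g_sq I.int_fZ[of "\<lambda>z. (norm (gt z))^2" 0] by simp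
  have ig: "integrable (measure_pmf \<mu>) gt"
  proof -
    have "integrable (measure_pmf \<mu>) (\<lambda>z. norm (gt z))"
      by (rule measure_pmf.square_integrable_imp_integrable[OF _ sg]) simp
    then show ?thesis by (subst integrable_norm_iff[symmetric]) auto
  qed
  have Eg: "integral\<^sup>L (measure_pmf \<mu>) gt = - DP" using E_g I.E_fZ[of gt 0] by simp
  have igZ: "integrable S (\<lambda>\<omega>. gt (Z m \<omega>))" for m using ig I.int_fZ[of gt m] by simp
  have EwS': "integral\<^sup>L S (\<lambda>\<omega>. wt' (Z 0 \<omega>)) = P"
  proof -
    have "integral\<^sup>L S (\<lambda>\<omega>. wt' (Z 0 \<omega>)) = integral\<^sup>L S (\<lambda>\<omega>. wt (Z 0 \<omega>))"
      by (rule integral_cong_AE) (use AEeps in \<open>auto elim!: eventually_mono simp: wt_eq\<close>)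
    then show ?thesis using E_w by simp
  qed
  have Pw': "integral\<^sup>L (measure_pmf \<mu>) wt' = P" using EwS' I.E_fZ[of wt' 0] by simp
  have tay_dummy: True ..
  have est'_form: "est q wt' gt Z M \<omega> = (1 / (((\<Sum>m<M. wt' (Z m \<omega>)) / real M) powr q)) *\<^sub>R ((1 / real M) *\<^sub>R (\<Sum>m<M. gt (Z m \<omega>)))" for M \<omega>
    unfolding est_def Let_def ..
  have est'_meas[measurable]: "est q wt' gt Z M \<in> borel_measurable S" for M
    unfolding est_def Let_def by measurable
  have est_meas[measurable]: "est q wt gt Z M \<in> borel_measurable S" for M
    unfolding est_def Let_def by measurable
  have wb_ge: "\<epsilon> \<le> (\<Sum>m<M. wt' (Z m \<omega>)) / real M" if "1 \<le> M" for M \<omega>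
  proof -
    have "(\<Sum>m<M. \<epsilon>) \<le> (\<Sum>m<M. wt' (Z m \<omega>))" by (intro sum_mono wt'_ge)
    then show ?thesis using that by (simp add: field_simps)
  qed
  have int': "integrable S (est q wt' gt Z M)" if M1: "1 \<le> M" for M
  proof -
    have igb: "integrable S (\<lambda>\<omega>. (1 / \<epsilon> powr q) *\<^sub>R ((1 / real M) *\<^sub>R (\<Sum>m<M. gt (Z m \<omega>))))"
      using igZ by (intro integrable_scaleR_right Bochner_Integration.integrable_sum) auto
    show ?thesis
    proof (rule Bochner_Integration.integrable_bound[OF igb est'_meas], intro AE_I2)
      fix \<omega>
      have ep: "0 < \<epsilon> powr q" using eps_pos by simp
      have "\<epsilon> powr q \<le> ((\<Sum>m<M. wt' (Z m \<omega>)) / real M) powr q"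
        by (rule powr_mono2) (use q_range wb_ge[OF M1] eps_pos in auto)
      then have "\<bar>1 / (((\<Sum>m<M. wt' (Z m \<omega>)) / real M) powr q)\<bar> \<le> 1 / \<epsilon> powr q"
        using ep by (simp add: frac_le)
      then show "norm (est q wt' gt Z M \<omega>) \<le> norm ((1 / \<epsilon> powr q) *\<^sub>R ((1 / real M) *\<^sub>R (\<Sum>m<M. gt (Z m \<omega>))))"
        unfolding est'_form norm_scaleR using ep by (intro mult_right_mono) auto
    qed
  qed
  have part2: "\<forall>M\<ge>1. integrable S (est q wt gt Z M)"
  proof (intro allI impI)
    fix M :: nat assume M1: "1 \<le> M"
    show "integrable S (est q wt gt Z M)"
      by (rule integrable_cong_AE_imp[OF int'[OF M1] est_meas]) (use AEest[of M] in \<open>auto elim: eventually_mono\<close>)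
  qed
  have intE: "integral\<^sup>L S (est q wt gt Z M) = integral\<^sup>L S (est q wt' gt Z M)" for M
    by (rule integral_cong_AE[OF est_meas est'_meas AEest])
  have part5: "q = 0 \<longrightarrow> (\<forall>M\<ge>1. integral\<^sup>L S (est q wt gt Z M) = grad_ell q P DP)"
  proof (intro impI allI)
    fix M :: nat assume q0: "q = 0" and M1: "1 \<le> M"
    have "est q wt' gt Z M \<omega> = (1 / real M) *\<^sub>R (\<Sum>m<M. gt (Z m \<omega>))" for \<omega>
    proof -
      have "0 < (\<Sum>m<M. wt' (Z m \<omega>)) / real M" using wb_ge[OF M1, of \<omega>] eps_pos by linarith
      then have "(\<Sum>m<M. wt' (Z m \<omega>)) \<noteq> 0" by auto
      then show ?thesis unfolding est'_form using q0 M1 by simp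
    qed
    then have ef: "est q wt' gt Z M = (\<lambda>\<omega>. (1 / real M) *\<^sub>R (\<Sum>m<M. gt (Z m \<omega>)))" by (intro ext)
    have "integral\<^sup>L S (est q wt' gt Z M) = (1 / real M) *\<^sub>R (\<Sum>m<M. integral\<^sup>L S (\<lambda>\<omega>. gt (Z m \<omega>)))"
      unfolding ef using igZ by (simp add: Bochner_Integration.integral_sum)
    also have "\<dots> = - DP" using E_g M1 by (simp add: sum_constant_scaleR)
    also have "\<dots> = grad_ell q P DP" using P_pos q0 by (simp add: grad_ell_def)
    finally show "integral\<^sup>L S (est q wt gt Z M) = grad_ell q P DP" using intE by simp
  qed
  have part1: "AE \<omega> in S. (\<lambda>M. est q wt gt Z M \<omega>) \<longlonglongrightarrow> grad_ell q P DP"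
  proof -
    have sw': "integrable (measure_pmf \<mu>) (\<lambda>z. (wt' z)^2)"
    proof (rule I.bdd_sq[where c=1])
      fix z have "\<epsilon> \<le> wt' z" "wt' z \<le> 1" by (rule wt'_ge, rule wt'_le)
      then show "\<bar>wt' z\<bar> \<le> 1" using eps_pos by (simp add: abs_le_iff)
    qed
    have A1: "AE \<omega> in S. (\<lambda>n. (\<Sum>m<n. wt' (Z m \<omega>)) / real n) \<longlonglongrightarrow> P"
      using I.slln_real[OF sw'] Pw' by simp
    have A2: "AE \<omega> in S. (\<lambda>n. (1 / real n) *\<^sub>R (\<Sum>m<n. gt (Z m \<omega>))) \<longlonglongrightarrow> - DP"
      using I.slln_vec[OF sg] Eg by simp
    show ?thesis using A1 A2 AEeps
    proof eventually_elim
      case (elim \<omega>)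
      have Pq: "P powr q \<noteq> 0" using P_pos by simp
      have "(\<lambda>n. (1 / (((\<Sum>m<n. wt' (Z m \<omega>)) / real n) powr q)) *\<^sub>R ((1 / real n) *\<^sub>R (\<Sum>m<n. gt (Z m \<omega>))))
          \<longlonglongrightarrow> (1 / (P powr q)) *\<^sub>R (- DP)"
        by (intro tendsto_scaleR tendsto_divide tendsto_const tendsto_powr elim(1) elim(2)) (use P_pos Pq in auto)
      moreover have "(1 / (P powr q)) *\<^sub>R (- DP) = grad_ell q P DP"
        by (simp add: grad_ell_def powr_minus_divide)
      ultimately have "(\<lambda>n. est q wt' gt Z n \<omega>) \<longlonglongrightarrow> grad_ell q P DP"
        unfolding est'_form by simp
      then show ?case using est_eq[OF elim(3)] by simp
    qed
  qed
  have P1: "P \<le> 1"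
  proof -
    have "integral\<^sup>L (measure_pmf \<mu>) wt' \<le> 1"
    proof (rule measure_pmf.integral_le_const)
      have wa: "\<bar>wt' z\<bar> \<le> 1" for z
      proof -
        have "\<epsilon> \<le> wt' z" "wt' z \<le> 1" by (rule wt'_ge, rule wt'_le)
        then show "\<bar>wt' z\<bar> \<le> 1" using eps_pos by (simp add: abs_le_iff)
      qed
      show "integrable (measure_pmf \<mu>) wt'"
        by (rule measure_pmf.integrable_const_bound[where B=1]) (use wa in auto)
    qed (use wt'_le in auto)
    then show ?thesis using Pw' by simp
  qed
  have w01: "0 \<le> wt z" "wt z \<le> 1" for z using w_prob by (auto simp: wt_def)
  have iw0: "integrable S (\<lambda>\<omega>. wt (Z 0 \<omega>))"
    by (rule I.int_bdd[where B=1]) (use w01 in \<open>auto simp: abs_le_iff intro: order.trans[of _ 0]\<close>)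
  define Vr where "Vr = rvar S (\<lambda>\<omega>. wt (Z 0 \<omega>))"
  define Cr where "Cr = rcov S (\<lambda>\<omega>. gt (Z 0 \<omega>)) (\<lambda>\<omega>. wt (Z 0 \<omega>))"
  have Vr_eq: "Vr = integral\<^sup>L S (\<lambda>\<omega>. (wt (Z 0 \<omega>) - P)^2)"
    unfolding Vr_def rvar_def using E_w by simp
  have Cr_eq: "Cr = integral\<^sup>L S (\<lambda>\<omega>. (wt (Z 0 \<omega>) - P) *\<^sub>R (gt (Z 0 \<omega>) + DP))"
    unfolding Cr_def rcov_def using E_w E_g by simp
  have wP1: "\<bar>wt z - P\<bar> \<le> 1" for z using w01[of z] P_pos P1 by (simp add: abs_le_iff)
  have iCr: "integrable S (\<lambda>\<omega>. (wt (Z 0 \<omega>) - P) *\<^sub>R (gt (Z 0 \<omega>) + DP))"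
  proof (rule Bochner_Integration.integrable_bound[where f="\<lambda>\<omega>. gt (Z 0 \<omega>) + DP"])
    show "integrable S (\<lambda>\<omega>. gt (Z 0 \<omega>) + DP)" using igZ by simp
    show "AE \<omega> in S. norm ((wt (Z 0 \<omega>) - P) *\<^sub>R (gt (Z 0 \<omega>) + DP)) \<le> norm (gt (Z 0 \<omega>) + DP)"
    proof (intro AE_I2)
      fix \<omega>
      have "\<bar>wt (Z 0 \<omega>) - P\<bar> * norm (gt (Z 0 \<omega>) + DP) \<le> 1 * norm (gt (Z 0 \<omega>) + DP)"
        by (intro mult_right_mono wP1) auto
      then show "norm ((wt (Z 0 \<omega>) - P) *\<^sub>R (gt (Z 0 \<omega>) + DP)) \<le> norm (gt (Z 0 \<omega>) + DP)" by simp
    qed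
  qed measurable
  have part4: "\<forall>C C'. norm ((1 / P) *\<^sub>R DP) \<le> C
                 \<and> (\<forall>z \<in> set_pmf (pz \<theta>0). norm (L z) \<le> C')
                 \<longrightarrow> (\<forall>M\<ge>1. norm (lead_term q P DP (rvar S (\<lambda>\<omega>. wt (Z 0 \<omega>))) (rcov S (\<lambda>\<omega>. gt (Z 0 \<omega>)) (\<lambda>\<omega>. wt (Z 0 \<omega>))) M) \<le> (C + C') * (q / (real M * P powr q)))"
  proof (intro allI impI)
    fix C C' :: real and M :: nat
    assume H: "norm ((1 / P) *\<^sub>R DP) \<le> C \<and> (\<forall>z \<in> set_pmf (pz \<theta>0). norm (L z) \<le> C')" and M1: "1 \<le> M"
    have C0: "0 \<le> C" using H norm_ge_zero order.trans by blast
    have Vr0: "0 \<le> Vr" unfolding Vr_eq by (rule integral_nonneg_AE) auto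
    have VrP: "Vr \<le> P"
    proof -
      have "Vr \<le> integral\<^sup>L S (\<lambda>\<omega>. wt (Z 0 \<omega>) - 2 * P * wt (Z 0 \<omega>) + P^2)"
        unfolding Vr_eq
      proof (rule integral_mono)
        show "integrable S (\<lambda>\<omega>. (wt (Z 0 \<omega>) - P)^2)"
        proof (rule I.int_bdd[where B=1])
          fix \<omega> show "\<bar>(wt (Z 0 \<omega>) - P)^2\<bar> \<le> 1"
            using power_le_one[OF abs_ge_zero wP1[of "Z 0 \<omega>"], of 2] by (simp add: power_abs)
        qed measurable
        show "integrable S (\<lambda>\<omega>. wt (Z 0 \<omega>) - 2 * P * wt (Z 0 \<omega>) + P^2)" using iw0 by simp
        fix \<omega>
        have "(wt (Z 0 \<omega>))^2 \<le> wt (Z 0 \<omega>)" using w01[of "Z 0 \<omega>"] by (simp add: power2_eq_square mult_left_le)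
        then show "(wt (Z 0 \<omega>) - P)^2 \<le> wt (Z 0 \<omega>) - 2 * P * wt (Z 0 \<omega>) + P^2"
          by (simp add: power2_diff)
      qed
      also have "\<dots> = P - 2 * P * P + P^2" using iw0 E_w by (simp add: I.prob_space)
      also have "\<dots> \<le> P" by (simp add: power2_eq_square)
      finally show ?thesis .
    qed
    have AEset: "AE \<omega> in S. Z 0 \<omega> \<in> set_pmf \<mu>"
    proof (rule AE_distrD[OF I.Z_meas])
      show "AE x in distr S (count_space UNIV) (Z 0). x \<in> set_pmf \<mu>"
        unfolding I.distr_Z by (rule AE_measure_pmf)
    qed
    have CrC: "norm Cr \<le> C' * P"
    proof -
      have "Cr = integral\<^sup>L S (\<lambda>\<omega>. (wt (Z 0 \<omega>) - P) *\<^sub>R gt (Z 0 \<omega>) + (wt (Z 0 \<omega>) - P) *\<^sub>R DP)"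
        unfolding Cr_eq by (simp add: scaleR_right_distrib)
      also have "\<dots> = integral\<^sup>L S (\<lambda>\<omega>. (wt (Z 0 \<omega>) - P) *\<^sub>R gt (Z 0 \<omega>)) + integral\<^sup>L S (\<lambda>\<omega>. (wt (Z 0 \<omega>) - P) *\<^sub>R DP)"
      proof (rule Bochner_Integration.integral_add)
        show "integrable S (\<lambda>\<omega>. (wt (Z 0 \<omega>) - P) *\<^sub>R DP)" using iw0 by simp
        moreover have "integrable S (\<lambda>\<omega>. (wt (Z 0 \<omega>) - P) *\<^sub>R gt (Z 0 \<omega>) + (wt (Z 0 \<omega>) - P) *\<^sub>R DP)"
          using iCr by (simp add: scaleR_right_distrib)
        ultimately have "integrable S (\<lambda>\<omega>. ((wt (Z 0 \<omega>) - P) *\<^sub>R gt (Z 0 \<omega>) + (wt (Z 0 \<omega>) - P) *\<^sub>R DP) - (wt (Z 0 \<omega>) - P) *\<^sub>R DP)"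
          by (intro Bochner_Integration.integrable_diff)
        then show "integrable S (\<lambda>\<omega>. (wt (Z 0 \<omega>) - P) *\<^sub>R gt (Z 0 \<omega>))" by simp
      qed
      also have "integral\<^sup>L S (\<lambda>\<omega>. (wt (Z 0 \<omega>) - P) *\<^sub>R DP) = 0"
        using iw0 E_w by (simp add: I.prob_space)
      finally have Cr2: "Cr = integral\<^sup>L S (\<lambda>\<omega>. (wt (Z 0 \<omega>) - P) *\<^sub>R gt (Z 0 \<omega>))" by simp
      have "norm Cr \<le> integral\<^sup>L S (\<lambda>\<omega>. norm ((wt (Z 0 \<omega>) - P) *\<^sub>R gt (Z 0 \<omega>)))"
        unfolding Cr2 by (rule integral_norm_bound)
      also have "\<dots> \<le> integral\<^sup>L S (\<lambda>\<omega>. C' * wt (Z 0 \<omega>))"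
      proof (rule integral_mono_AE)
        have "integrable S (\<lambda>\<omega>. (wt (Z 0 \<omega>) - P) *\<^sub>R gt (Z 0 \<omega>))"
        proof -
          have "integrable S (\<lambda>\<omega>. ((wt (Z 0 \<omega>) - P) *\<^sub>R (gt (Z 0 \<omega>) + DP)) - (wt (Z 0 \<omega>) - P) *\<^sub>R DP)"
            using iCr iw0 by (intro Bochner_Integration.integrable_diff) auto
          then show ?thesis by (simp add: scaleR_right_distrib)
        qed
        then show "integrable S (\<lambda>\<omega>. norm ((wt (Z 0 \<omega>) - P) *\<^sub>R gt (Z 0 \<omega>)))" by (rule integrable_norm)
        show "integrable S (\<lambda>\<omega>. C' * wt (Z 0 \<omega>))" using iw0 by simp
        show "AE \<omega> in S. norm ((wt (Z 0 \<omega>) - P) *\<^sub>R gt (Z 0 \<omega>)) \<le> C' * wt (Z 0 \<omega>)"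
          using AEset
        proof eventually_elim
          case (elim \<omega>)
          have LC: "norm (L (Z 0 \<omega>)) \<le> C'" using H elim by (simp add: \<mu>_def)
          have "norm ((wt (Z 0 \<omega>) - P) *\<^sub>R gt (Z 0 \<omega>)) = \<bar>wt (Z 0 \<omega>) - P\<bar> * (wt (Z 0 \<omega>) * norm (L (Z 0 \<omega>)))"
            using w01[of "Z 0 \<omega>"] by (simp add: gt_def wt_def abs_mult)
          also have "\<dots> \<le> 1 * (wt (Z 0 \<omega>) * C')"
            by (intro mult_mono wP1 mult_left_mono LC) (use w01[of "Z 0 \<omega>"] in auto)
          finally show ?case by (simp add: mult.commute)
        qed
      qed
      also have "\<dots> = C' * P" using E_w by simp
      finally show ?thesis .
    qed
    have ge1: "grad_ell 1 P DP = - ((1 / P) *\<^sub>R DP)"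
      using P_pos by (simp add: grad_ell_def powr_minus_divide)
    have n0: "0 < real M" using M1 by simp
    have Pq: "P powr (q + 1) = P powr q * P" using P_pos by (simp add: powr_add)
    have Pq0: "0 < P powr q" using P_pos by simp
    have "norm (lead_term q P DP Vr Cr M) = q / (real M * P powr (q + 1)) * norm (((q + 1) / 2 * Vr) *\<^sub>R grad_ell 1 P DP - Cr)"
      unfolding lead_term_def using q_range P_pos n0 by (simp add: abs_of_nonneg)
    also have "\<dots> \<le> q / (real M * P powr (q + 1)) * ((q + 1) / 2 * Vr * C + C' * P)"
    proof (intro mult_left_mono)
      have "norm (((q + 1) / 2 * Vr) *\<^sub>R grad_ell 1 P DP - Cr) \<le> norm (((q + 1) / 2 * Vr) *\<^sub>R grad_ell 1 P DP) + norm Cr"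
        by (rule norm_triangle_ineq4)
      also have "norm (((q + 1) / 2 * Vr) *\<^sub>R grad_ell 1 P DP) = (q + 1) / 2 * Vr * norm ((1 / P) *\<^sub>R DP)"
        unfolding ge1 using q_range Vr0 by (simp only: norm_scaleR norm_minus_cancel) (simp add: abs_of_nonneg)
      also have "\<dots> \<le> (q + 1) / 2 * Vr * C" using H q_range Vr0 by (intro mult_left_mono) auto
      finally show "norm (((q + 1) / 2 * Vr) *\<^sub>R grad_ell 1 P DP - Cr) \<le> (q + 1) / 2 * Vr * C + C' * P"
        using CrC by linarith
    qed (use q_range n0 P_pos in auto)
    also have "\<dots> \<le> q / (real M * P powr (q + 1)) * (P * C + C' * P)"
    proof (intro mult_left_mono add_right_mono)
      have "(q + 1) / 2 * Vr \<le> 1 * P" using q_range Vr0 VrP by (intro mult_mono) auto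
      then show "(q + 1) / 2 * Vr * C \<le> P * C" using C0 by (intro mult_right_mono) auto
    qed (use q_range n0 P_pos in auto)
    also have "\<dots> = (C + C') * (q / (real M * P powr q))"
      unfolding Pq using P_pos n0 Pq0 by (simp add: field_simps)
    finally show "norm (lead_term q P DP (rvar S (\<lambda>\<omega>. wt (Z 0 \<omega>))) (rcov S (\<lambda>\<omega>. gt (Z 0 \<omega>)) (\<lambda>\<omega>. wt (Z 0 \<omega>))) M) \<le> (C + C') * (q / (real M * P powr q))"
      unfolding Vr_def Cr_def .
  qed
  have part3: "(\<lambda>M. norm (integral\<^sup>L S (est q wt gt Z M) - grad_ell q P DP - lead_term q P DP (rvar S (\<lambda>\<omega>. wt (Z 0 \<omega>))) (rcov S (\<lambda>\<omega>. gt (Z 0 \<omega>)) (\<lambda>\<omega>. wt (Z 0 \<omega>))) M))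
            \<in> O(\<lambda>M. 1 / (real M)\<^sup>2)"
  proof -
    define D where "D M = integral\<^sup>L S (est q wt gt Z M) - grad_ell q P DP - lead_term q P DP Vr Cr M" for M
    have comp: "\<exists>K. \<forall>M\<ge>1. \<bar>D M \<bullet> b\<bar> \<le> K / (real M)^2" if b: "b \<in> Basis" for b
    proof -
      define Gb where "Gb z = gt z \<bullet> b" for z
      have sGb: "integrable (measure_pmf \<mu>) (\<lambda>z. (Gb z)^2)"
      proof (rule Bochner_Integration.integrable_bound[OF sg])
        show "AE x in measure_pmf \<mu>. norm ((Gb x)^2) \<le> norm ((norm (gt x))^2)"
          using Basis_le_norm[OF b] by (auto intro!: AE_I2 simp: Gb_def simp flip: abs_le_square_iff)
      qed simp
      from I.bias_real[OF eps_pos wt'_ge wt'_le q_range(1) q_range(2) sGb] obtain K where K: "\<forall>M\<ge>1. \<bar>integral\<^sup>L S (\<lambda>\<omega>. (1 / (((\<Sum>m<M. wt' (Z m \<omega>)) / real M) powr q)) * ((1 / real M) * (\<Sum>m<M. Gb (Z m \<omega>))))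
      - integral\<^sup>L (measure_pmf \<mu>) Gb * integral\<^sup>L (measure_pmf \<mu>) wt' powr (-q)
      - q / (real M * integral\<^sup>L (measure_pmf \<mu>) wt' powr (q+1)) * ((q+1)/2 * integral\<^sup>L (measure_pmf \<mu>) (\<lambda>z. (wt' z - integral\<^sup>L (measure_pmf \<mu>) wt')^2)
          * (integral\<^sup>L (measure_pmf \<mu>) Gb / integral\<^sup>L (measure_pmf \<mu>) wt')
          - integral\<^sup>L (measure_pmf \<mu>) (\<lambda>z. (wt' z - integral\<^sup>L (measure_pmf \<mu>) wt') * (Gb z - integral\<^sup>L (measure_pmf \<mu>) Gb)))\<bar>
     \<le> K / (real M)^2"
        by (rule exE)
      have EGb: "integral\<^sup>L (measure_pmf \<mu>) Gb = - (DP \<bullet> b)"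
      proof -
        have "integral\<^sup>L (measure_pmf \<mu>) (\<lambda>z. gt z \<bullet> b) = integral\<^sup>L (measure_pmf \<mu>) gt \<bullet> b" using ig by simp
        then show ?thesis using Eg by (simp add: Gb_def[abs_def])
      qed
      have AEw: "AE \<omega> in S. wt' (Z 0 \<omega>) = wt (Z 0 \<omega>)" using AEeps by (auto elim!: eventually_mono simp: wt_eq)
      have Vmu: "integral\<^sup>L (measure_pmf \<mu>) (\<lambda>z. (wt' z - integral\<^sup>L (measure_pmf \<mu>) wt')^2) = Vr"
      proof -
        have "integral\<^sup>L S (\<lambda>\<omega>. (wt (Z 0 \<omega>) - P)^2) = integral\<^sup>L S (\<lambda>\<omega>. (wt' (Z 0 \<omega>) - P)^2)"
          by (rule integral_cong_AE) (use AEw in \<open>auto elim!: eventually_mono\<close>)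
        also have "\<dots> = integral\<^sup>L (measure_pmf \<mu>) (\<lambda>z. (wt' z - P)^2)" by (rule I.E_fZ)
        finally show ?thesis unfolding Vr_eq Pw' by simp
      qed
      have Cmu: "integral\<^sup>L (measure_pmf \<mu>) (\<lambda>z. (wt' z - integral\<^sup>L (measure_pmf \<mu>) wt') * (Gb z - integral\<^sup>L (measure_pmf \<mu>) Gb)) = Cr \<bullet> b"
      proof -
        have "Cr \<bullet> b = integral\<^sup>L S (\<lambda>\<omega>. ((wt (Z 0 \<omega>) - P) *\<^sub>R (gt (Z 0 \<omega>) + DP)) \<bullet> b)"
          unfolding Cr_eq by (rule integral_inner_left[symmetric]) (use iCr in auto)
        also have "\<dots> = integral\<^sup>L S (\<lambda>\<omega>. (wt' (Z 0 \<omega>) - P) * (Gb (Z 0 \<omega>) + DP \<bullet> b))"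
          by (rule integral_cong_AE) (use AEw in \<open>auto elim!: eventually_mono simp: Gb_def inner_add_left\<close>)
        also have "\<dots> = integral\<^sup>L (measure_pmf \<mu>) (\<lambda>z. (wt' z - P) * (Gb z + DP \<bullet> b))" by (rule I.E_fZ)
        finally show ?thesis unfolding Pw' EGb by simp
      qed
      show ?thesis
      proof (intro exI[of _ K] allI impI)
        fix M :: nat assume M1: "1 \<le> M"
        have Eest: "integral\<^sup>L S (est q wt gt Z M) \<bullet> b = integral\<^sup>L S (\<lambda>\<omega>. (1 / (((\<Sum>m<M. wt' (Z m \<omega>)) / real M) powr q)) * ((1 / real M) * (\<Sum>m<M. Gb (Z m \<omega>))))"
        proof -
          have "integral\<^sup>L S (est q wt gt Z M) \<bullet> b = integral\<^sup>L S (\<lambda>\<omega>. est q wt' gt Z M \<omega> \<bullet> b)"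
            unfolding intE using int'[OF M1] by simp
          also have "\<dots> = integral\<^sup>L S (\<lambda>\<omega>. (1 / (((\<Sum>m<M. wt' (Z m \<omega>)) / real M) powr q)) * ((1 / real M) * (\<Sum>m<M. Gb (Z m \<omega>))))"
            unfolding est'_form by (simp add: inner_sum_left Gb_def)
          finally show ?thesis .
        qed
        have Egr: "grad_ell q P DP \<bullet> b = integral\<^sup>L (measure_pmf \<mu>) Gb * P powr (-q)"
          unfolding EGb grad_ell_def by simp
        have Eld: "lead_term q P DP Vr Cr M \<bullet> b = q / (real M * P powr (q+1)) * ((q+1)/2 * Vr * (integral\<^sup>L (measure_pmf \<mu>) Gb / P) - Cr \<bullet> b)"
          unfolding lead_term_def EGb grad_ell_def using P_pos by (simp add: inner_diff_left powr_minus_divide)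
        have "D M \<bullet> b = integral\<^sup>L S (\<lambda>\<omega>. (1 / (((\<Sum>m<M. wt' (Z m \<omega>)) / real M) powr q)) * ((1 / real M) * (\<Sum>m<M. Gb (Z m \<omega>))))
          - integral\<^sup>L (measure_pmf \<mu>) Gb * P powr (-q) - q / (real M * P powr (q+1)) * ((q+1)/2 * Vr * (integral\<^sup>L (measure_pmf \<mu>) Gb / P) - Cr \<bullet> b)"
          unfolding D_def inner_diff_left Eest Egr Eld ..
        moreover have "\<bar>integral\<^sup>L S (\<lambda>\<omega>. (1 / (((\<Sum>m<M. wt' (Z m \<omega>)) / real M) powr q)) * ((1 / real M) * (\<Sum>m<M. Gb (Z m \<omega>))))
          - integral\<^sup>L (measure_pmf \<mu>) Gb * P powr (-q) - q / (real M * P powr (q+1)) * ((q+1)/2 * Vr * (integral\<^sup>L (measure_pmf \<mu>) Gb / P) - Cr \<bullet> b)\<bar>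
           \<le> K / (real M)^2"
          using K[rule_format, OF M1] unfolding Vmu Cmu unfolding Pw' .
        ultimately show "\<bar>D M \<bullet> b\<bar> \<le> K / (real M)^2" by simp
      qed
    qed
    then have KK: "\<forall>b\<in>Basis. \<exists>K. \<forall>M\<ge>1. \<bar>D M \<bullet> b\<bar> \<le> K / (real M)^2" by blast
    obtain Kf where Kf: "\<forall>b\<in>Basis. \<forall>M\<ge>1. \<bar>D M \<bullet> b\<bar> \<le> Kf b / (real M)^2" using bchoice[OF KK] by blast
    have "(\<lambda>M. norm (D M)) \<in> O(\<lambda>M. 1 / (real M)\<^sup>2)"
    proof (rule bigoI[where c="\<Sum>b\<in>Basis. Kf b"], intro eventually_sequentiallyI[of 1])
      fix M :: nat assume M1: "1 \<le> M"
      have "norm (norm (D M)) \<le> (\<Sum>b\<in>Basis. \<bar>D M \<bullet> b\<bar>)" using norm_le_l1[of "D M"] by simp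
      also have "\<dots> \<le> (\<Sum>b\<in>Basis. Kf b / (real M)^2)" by (intro sum_mono) (use Kf M1 in auto)
      also have "\<dots> = (\<Sum>b\<in>Basis. Kf b) * norm (1 / (real M)^2)" by (simp add: sum_divide_distrib)
      finally show "norm (norm (D M)) \<le> (\<Sum>b\<in>Basis. Kf b) * norm (1 / (real M)^2)" .
    qed
    then show ?thesis unfolding D_def Vr_def Cr_def .
  qed
  show ?thesis using part1 part2 part3 part4 part5 by blast
qed

end
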